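(* Let $G,H$ be finite groups, $U\leq G\times H$ a subdirect product, and $A$ an abelian group satisfying the Hypothesis for a set of primes $\pi$. Then $U$ is $A$-extensible if and only if for every $p\in\pi$, $k_1(U')$ contains a Sylow $p$-subgroup of $G'\cap k_1(U)$; equivalently, if and only if for every $p\in\pi$, $k_2(U')$ contains a Sylow $p$-subgroup of $H'\cap k_2(U)$.
   Context: For $U\leq G\times H$: $p_1(U)=\{g:\exists h,(g,h)\in U\}$, $p_2(U)=\{h:\exists g,(g,h)\in U\}$, $k_1(U)=\{g:(g,1)\in U\}$, $k_2(U)=\{h:(1,h)\in U\}$; $U$ is a subdirect product if $p_1(U)=G$, $p_2(U)=H$. $X'$ is the commutator subgroup of $X$. An abelian group $A$ satisfies the Hypothesis (with set of primes $\pi$) if there is a unique set of primes $\pi$ such that for every $n\in\mathbb{N}$ the $n$-torsion part of $A$ is cyclic of order $n_\pi$ (the $\pi$-part of $n$). $U$ is $A$-extensible if every homomorphism $U\to A$ extends to a homomorphism $G\times H\to A$. *)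

theory Defs
  imports "HOL-Algebra.Algebra" "HOL-Computational_Algebra.Primes"
begin

definition k1 :: "('a, 'c) monoid_scheme \<Rightarrow> ('b, 'd) monoid_scheme \<Rightarrow> ('a \<times> 'b) set \<Rightarrow> 'a set" where
  "k1 G H U = {g \<in> carrier G. (g, \<one>\<^bsub>H\<^esub>) \<in> U}"

definition k2 :: "('a, 'c) monoid_scheme \<Rightarrow> ('b, 'd) monoid_scheme \<Rightarrow> ('a \<times> 'b) set \<Rightarrow> 'b set" where
  "k2 G H U = {h \<in> carrier H. (\<one>\<^bsub>G\<^esub>, h) \<in> U}"

definition subdirect :: "('a, 'c) monoid_scheme \<Rightarrow> ('b, 'd) monoid_scheme \<Rightarrow> ('a \<times> 'b) set \<Rightarrow> bool" where
  "subdirect G H U \<longleftrightarrow> subgroup U (G \<times>\<times> H) \<and> fst ` U = carrier G \<and> snd ` U = carrier H"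

definition pi_part :: "nat set \<Rightarrow> nat \<Rightarrow> nat" where
  "pi_part \<pi> n = (\<Prod>p \<in> prime_factors n \<inter> \<pi>. p ^ multiplicity p n)"

definition torsion_part :: "('a, 'b) monoid_scheme \<Rightarrow> nat \<Rightarrow> 'a set" where
  "torsion_part A n = {a \<in> carrier A. a [^]\<^bsub>A\<^esub> n = \<one>\<^bsub>A\<^esub>}"

definition satisfies_hypothesis :: "('a, 'b) monoid_scheme \<Rightarrow> nat set \<Rightarrow> bool" where
  "satisfies_hypothesis A \<pi> \<longleftrightarrow> (\<forall>p \<in> \<pi>. Factorial_Ring.prime p) \<and>
     (\<forall>n::nat. n > 0 \<longrightarrow>
        cyclic_group (subgroup_generated A (torsion_part A n)) \<and>
        card (torsion_part A n) = pi_part \<pi> n)"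

definition extensible :: "('a, 'c) monoid_scheme \<Rightarrow> ('b, 'd) monoid_scheme \<Rightarrow> ('e, 'f) monoid_scheme
     \<Rightarrow> ('a \<times> 'b) set \<Rightarrow> bool" where
  "extensible G H A U \<longleftrightarrow>
     (\<forall>\<phi> \<in> hom (subgroup_generated (G \<times>\<times> H) U) A.
        \<exists>\<psi> \<in> hom (G \<times>\<times> H) A. \<forall>u \<in> U. \<psi> u = \<phi> u)"

definition sylow_subgroup_of :: "('a, 'b) monoid_scheme \<Rightarrow> nat \<Rightarrow> 'a set \<Rightarrow> 'a set \<Rightarrow> bool" where
  "sylow_subgroup_of G p P K \<longleftrightarrow>
     subgroup P G \<and> P \<subseteq> K \<and> card P = p ^ multiplicity p (card K)"

end

theory Submission
  imports Defs
begin


lemma (in group) card_fibres_hom: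
  assumes h: "h \<in> hom G Y" and Y: "group Y" and Sg: "subgroup Sg G" and fin: "finite Sg"
  shows "card Sg = card (h ` Sg) * card {x\<in>Sg. h x = \<one>\<^bsub>Y\<^esub>}"
proof -
  interpret Y: group Y by (rule Y)
  define K where "K = {x\<in>Sg. h x = \<one>\<^bsub>Y\<^esub>}"
  have Xc: "Sg \<subseteq> carrier G" using Sg subgroup.subset by blast
  have hm: "\<And>x y. x \<in> carrier G \<Longrightarrow> y \<in> carrier G \<Longrightarrow> h (x \<otimes> y) = h x \<otimes>\<^bsub>Y\<^esub> h y"
    using h by (simp add: hom_def)
  have hc: "\<And>x. x \<in> carrier G \<Longrightarrow> h x \<in> carrier Y" using h by (auto simp: hom_def)
  have hinv: "\<And>x. x \<in> carrier G \<Longrightarrow> h (inv x) = inv\<^bsub>Y\<^esub> h x"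
    using group_hom.hom_inv[of G Y h] h Y by (simp add: group_hom_def group_hom_axioms_def is_group)
  have fib: "card {x\<in>Sg. h x = y} = card K" if yin: "y \<in> h ` Sg" for y
  proof -
    obtain x0 where x0: "x0 \<in> Sg" "y = h x0" using yin by blast
    have x0c: "x0 \<in> carrier G" using x0 Xc by blast
    have s1: "{x\<in>Sg. h x = y} \<subseteq> (\<lambda>k. x0 \<otimes> k) ` K"
    proof
      fix x assume x: "x \<in> {x\<in>Sg. h x = y}"
      hence xc: "x \<in> carrier G" using Xc by blast
      have "inv x0 \<otimes> x \<in> K"
        unfolding K_def using x x0 x0c xc Sg
        by (simp add: hm hinv hc subgroup.m_closed subgroup.m_inv_closed Y.l_inv)
      moreover have "x = x0 \<otimes> (inv x0 \<otimes> x)" using x0c xc by (simp add: m_assoc[symmetric])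
      ultimately show "x \<in> (\<lambda>k. x0 \<otimes> k) ` K" by blast
    qed
    have s2: "(\<lambda>k. x0 \<otimes> k) ` K \<subseteq> {x\<in>Sg. h x = y}"
    proof
      fix x assume "x \<in> (\<lambda>k. x0 \<otimes> k) ` K"
      then obtain k where k: "k \<in> K" "x = x0 \<otimes> k" by blast
      hence kc: "k \<in> carrier G" using Xc K_def by blast
      show "x \<in> {x\<in>Sg. h x = y}" using k x0 x0c kc Sg unfolding K_def
        by (simp add: hm hc subgroup.m_closed)
    qed
    have "{x\<in>Sg. h x = y} = (\<lambda>k. x0 \<otimes> k) ` K" using s1 s2 by (rule equalityI)
    moreover have "inj_on (\<lambda>k. x0 \<otimes> k) K"
      using x0c Xc K_def by (auto simp: inj_on_def) (metis l_cancel subsetD)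
    ultimately show ?thesis by (simp add: card_image)
  qed
  have XU: "Sg = (\<Union>y\<in>h ` Sg. {x\<in>Sg. h x = y})" by blast
  have "card Sg = (\<Sum>y\<in>h ` Sg. card {x\<in>Sg. h x = y})"
    by (subst XU, rule card_UN_disjoint) (use fin in auto)
  also have "\<dots> = (\<Sum>y\<in>h ` Sg. card K)" using fib by simp
  finally show ?thesis by (simp add: K_def)
qed

lemma pi_part_ext:
  assumes "finite S" "prime_factors n \<subseteq> S" "n > 0" "\<forall>p\<in>\<pi>. Factorial_Ring.prime p"
  shows "pi_part \<pi> n = (\<Prod>p\<in>S \<inter> \<pi>. p ^ multiplicity p n)"
  unfolding pi_part_def
proof (rule prod.mono_neutral_left)
  show "finite (S \<inter> \<pi>)" using assms by simp
  show "prime_factors n \<inter> \<pi> \<subseteq> S \<inter> \<pi>" using assms by blast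
  show "\<forall>i\<in>S \<inter> \<pi> - prime_factors n \<inter> \<pi>. i ^ multiplicity i n = 1"
  proof
    fix i assume "i \<in> S \<inter> \<pi> - prime_factors n \<inter> \<pi>"
    hence "i \<notin> prime_factors n" by blast
    moreover have "Factorial_Ring.prime i" using assms(4) \<open>i \<in> S \<inter> \<pi> - prime_factors n \<inter> \<pi>\<close> by blast
    ultimately have "\<not> i dvd n" using assms(3) by (auto simp: in_prime_factors_iff)
    hence "multiplicity i n = 0"
      by (rule not_dvd_imp_multiplicity_0)
    thus "i ^ multiplicity i n = 1" by simp
  qed
qed

lemma pi_part_mult:
  assumes "m > 0" "k > 0" "\<forall>p\<in>\<pi>. Factorial_Ring.prime p"
  shows "pi_part \<pi> (m * k) = pi_part \<pi> m * pi_part \<pi> k"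
proof -
  define S where "S = prime_factors m \<union> prime_factors k"
  have fS: "finite S" by (simp add: S_def)
  have mk: "prime_factors (m*k) = S" using assms by (simp add: S_def prime_factors_product)
  have "pi_part \<pi> (m*k) = (\<Prod>p\<in>S \<inter> \<pi>. p ^ multiplicity p (m*k))"
    using pi_part_ext[OF fS _ ] mk assms by simp
  also have "\<dots> = (\<Prod>p\<in>S \<inter> \<pi>. p ^ multiplicity p m * p ^ multiplicity p k)"
    by (rule prod.cong) (use assms in \<open>auto simp: prime_elem_multiplicity_mult_distrib power_add\<close>)
  also have "\<dots> = pi_part \<pi> m * pi_part \<pi> k"
    using pi_part_ext[OF fS, of m] pi_part_ext[OF fS, of k] assms
    by (simp add: prod.distrib S_def)
  finally show ?thesis .
qed

lemma pi_part_pos: "\<forall>p\<in>\<pi>. Factorial_Ring.prime p \<Longrightarrow> pi_part \<pi> n > 0"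
  unfolding pi_part_def by (rule prod_pos) (auto intro: prime_gt_0_nat)

lemma pi_part_one: "(\<And>p. p \<in> \<pi> \<Longrightarrow> \<not> p dvd n) \<Longrightarrow> pi_part \<pi> n = 1"
  unfolding pi_part_def
  by (rule prod.neutral) (auto simp: in_prime_factors_iff)

lemma pi_part_prime: "p \<in> \<pi> \<Longrightarrow> Factorial_Ring.prime p \<Longrightarrow> pi_part \<pi> p = p"
  unfolding pi_part_def by (simp add: prime_prime_factors Int_absorb2 multiplicity_self prime_imp_prime_elem)



lemma (in comm_group) torsion_subgroup: "subgroup (torsion_part G n) G"
  unfolding torsion_part_def
  by (rule subgroupI) (auto simp: pow_mult_distrib m_comm nat_pow_inv)

lemma (in comm_group) pow_hom: "(\<lambda>x. x [^] (k::nat)) \<in> hom G G"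
  by (auto simp: hom_def pow_mult_distrib m_comm)

lemma (in comm_group) root_exists:
  fixes m k :: nat
  assumes hyp: "satisfies_hypothesis G \<pi>" and a: "a \<in> carrier G" "a [^] m = \<one>"
    and m: "m > 0" and k: "k > 0"
  shows "\<exists>t\<in>carrier G. t [^] k = a"
proof -
  define T where "T = torsion_part G"
  have pr: "\<forall>p\<in>\<pi>. Factorial_Ring.prime p" using hyp by (simp add: satisfies_hypothesis_def)
  have cT: "\<And>n. n > 0 \<Longrightarrow> card (T n) = pi_part \<pi> n" using hyp by (simp add: satisfies_hypothesis_def T_def)
  have fT: "\<And>n. n > 0 \<Longrightarrow> finite (T n)" using cT pi_part_pos[OF pr]
    by (metis card_ge_0_finite)
  have mk: "m * k > 0" using m k by simp
  have "card (T (m*k)) = card ((\<lambda>x. x [^] k) ` T (m*k)) * card {x\<in>T (m*k). x [^] k = \<one>}"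
    using card_fibres_hom[OF pow_hom is_group torsion_subgroup fT[OF mk, unfolded T_def]]
    by (simp add: T_def)
  moreover have "{x\<in>T (m*k). x [^] k = \<one>} = T k"
  proof -
    have "x [^] (m*k) = \<one>" if "x \<in> carrier G" "x [^] k = \<one>" for x
      using that nat_pow_pow[of x k m] by (simp add: mult.commute)
    thus ?thesis by (auto simp: T_def torsion_part_def)
  qed
  ultimately have "pi_part \<pi> m * pi_part \<pi> k = card ((\<lambda>x. x [^] k) ` T (m*k)) * pi_part \<pi> k"
    using cT[OF mk] cT[OF k] pi_part_mult[OF m k pr] by simp
  hence c1: "card ((\<lambda>x. x [^] k) ` T (m*k)) = card (T m)"
    using pi_part_pos[OF pr, of k] cT[OF m] by simp
  have sub: "(\<lambda>x. x [^] k) ` T (m*k) \<subseteq> T m"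
  proof -
    have "(x [^] k) [^] m = \<one>" if "x \<in> carrier G" "x [^] (m*k) = \<one>" for x
      using that nat_pow_pow[of x k m] by (simp add: mult.commute)
    thus ?thesis by (auto simp: T_def torsion_part_def)
  qed
  have "(\<lambda>x. x [^] k) ` T (m*k) = T m"
    by (rule card_subset_eq[OF fT[OF m] sub c1])
  moreover have "a \<in> T m" using a by (simp add: T_def torsion_part_def)
  ultimately obtain t where "t \<in> T (m*k)" "a = t [^] k" by blast
  thus ?thesis by (auto simp: T_def torsion_part_def)
qed

lemma (in comm_group) elem_order_p:
  fixes p :: nat
  assumes hyp: "satisfies_hypothesis G \<pi>" and p: "p \<in> \<pi>"
  shows "\<exists>z\<in>carrier G. z [^] p = \<one> \<and> z \<noteq> \<one>"
proof -
  have pr: "Factorial_Ring.prime p" using hyp p by (simp add: satisfies_hypothesis_def)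
  hence "card (torsion_part G p) = p" using hyp p pi_part_prime[OF p pr]
    by (simp add: satisfies_hypothesis_def prime_gt_0_nat)
  hence "card (torsion_part G p) \<ge> 2" using pr prime_ge_2_nat by simp
  moreover have "card (torsion_part G p) \<le> 1" if "torsion_part G p \<subseteq> {\<one>}"
    using card_mono[OF _ that] by simp
  ultimately have "\<not> torsion_part G p \<subseteq> {\<one>}" by linarith
  thus ?thesis by (auto simp: torsion_part_def)
qed



definition mhom :: "('a,'b) monoid_scheme \<Rightarrow> ('e,'f) monoid_scheme \<Rightarrow> 'a set \<Rightarrow> ('a \<Rightarrow> 'e) \<Rightarrow> bool" where
  "mhom G A V f \<longleftrightarrow> f \<in> V \<rightarrow> carrier A \<and> (\<forall>x\<in>V. \<forall>y\<in>V. f (x \<otimes>\<^bsub>G\<^esub> y) = f x \<otimes>\<^bsub>A\<^esub> f y)"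

lemma mhom_hom:
  assumes "subgroup V G" shows "mhom G A V f \<longleftrightarrow> f \<in> hom (subgroup_generated G V) A"
  using assms by (simp add: mhom_def hom_def subgroup.carrier_subgroup_generated_subgroup)

lemma mhom_carrier: "mhom G A (carrier G) f \<longleftrightarrow> f \<in> hom G A"
  by (simp add: mhom_def hom_def)

lemma mhom_props:
  assumes G: "group G" and A: "group A" and V: "subgroup V G" and f: "mhom G A V f"
  shows "f \<one>\<^bsub>G\<^esub> = \<one>\<^bsub>A\<^esub>"
    and "\<And>x. x \<in> V \<Longrightarrow> f (inv\<^bsub>G\<^esub> x) = inv\<^bsub>A\<^esub> f x"
    and "\<And>x (i::int). x \<in> V \<Longrightarrow> f (x [^]\<^bsub>G\<^esub> i) = f x [^]\<^bsub>A\<^esub> i"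
    and "\<And>x (n::nat). x \<in> V \<Longrightarrow> f (x [^]\<^bsub>G\<^esub> n) = f x [^]\<^bsub>A\<^esub> n"
    and "\<And>x. x \<in> V \<Longrightarrow> f x \<in> carrier A"
proof -
  interpret G: group G by (rule G)
  have h: "f \<in> hom (subgroup_generated G V) A" using mhom_hom[OF V, THEN iffD1, OF f] .
  have gh: "group_hom (subgroup_generated G V) A f"
    using h A by (simp add: group_hom_def group_hom_axioms_def)
  have cV: "carrier (subgroup_generated G V) = V" by (rule subgroup.carrier_subgroup_generated_subgroup[OF V])
  show "f \<one>\<^bsub>G\<^esub> = \<one>\<^bsub>A\<^esub>" using group_hom.hom_one[OF gh] by simp
  show "\<And>x. x \<in> V \<Longrightarrow> f (inv\<^bsub>G\<^esub> x) = inv\<^bsub>A\<^esub> f x"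
    using group_hom.hom_inv[OF gh] cV G.inv_subgroup_generated by metis
  show "\<And>x (i::int). x \<in> V \<Longrightarrow> f (x [^]\<^bsub>G\<^esub> i) = f x [^]\<^bsub>A\<^esub> i"
    using group_hom.hom_int_pow[OF gh] cV G.int_pow_subgroup_generated by metis
  show "\<And>x (n::nat). x \<in> V \<Longrightarrow> f (x [^]\<^bsub>G\<^esub> n) = f x [^]\<^bsub>A\<^esub> n"
    using group_hom.hom_nat_pow[OF gh] cV pow_subgroup_generated by metis
  show "\<And>x. x \<in> V \<Longrightarrow> f x \<in> carrier A" using f by (auto simp: mhom_def)
qed



lemma (in group) cancel_l [simp]: "x \<in> carrier G \<Longrightarrow> y \<in> carrier G \<Longrightarrow> inv x \<otimes> (x \<otimes> y) = y"
  by (simp add: m_assoc[symmetric])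
lemma (in group) cancel_r [simp]: "x \<in> carrier G \<Longrightarrow> y \<in> carrier G \<Longrightarrow> x \<otimes> (inv x \<otimes> y) = y"
  by (simp add: m_assoc[symmetric])

lemma (in comm_group) cg1:
  assumes "a \<in> carrier G" "b \<in> carrier G" "a' \<in> carrier G" "b' \<in> carrier G"
    and "inv a' \<otimes> a = b' \<otimes> inv b"
  shows "a \<otimes> b = a' \<otimes> b'"
proof -
  have "a = a' \<otimes> (b' \<otimes> inv b)" using assms inv_solve_left' by auto
  hence "a \<otimes> b = a' \<otimes> b' \<otimes> (inv b \<otimes> b)" using assms by (simp add: m_assoc)
  thus ?thesis using assms by simp
qed

definition ext_inv :: "('a,'b) monoid_scheme \<Rightarrow> ('e,'f) monoid_scheme \<Rightarrow> 'a set \<Rightarrow> 'a set \<Rightarrow> ('a \<Rightarrow> 'e) \<Rightarrow> bool" where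
  "ext_inv G A K V \<psi> \<longleftrightarrow> subgroup V G \<and> V \<subseteq> K \<and>
     (\<forall>x\<in>K. \<forall>y\<in>K. x \<otimes>\<^bsub>G\<^esub> y \<otimes>\<^bsub>G\<^esub> inv\<^bsub>G\<^esub> x \<otimes>\<^bsub>G\<^esub> inv\<^bsub>G\<^esub> y \<in> V) \<and> mhom G A V \<psi> \<and>
     (\<forall>x\<in>K. \<forall>y\<in>K. \<psi> (x \<otimes>\<^bsub>G\<^esub> y \<otimes>\<^bsub>G\<^esub> inv\<^bsub>G\<^esub> x \<otimes>\<^bsub>G\<^esub> inv\<^bsub>G\<^esub> y) = \<one>\<^bsub>A\<^esub>)"

lemma ext_inv_conj:
  assumes G: "group G" and A: "comm_group A" and K: "subgroup K G" and I: "ext_inv G A K V \<psi>"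
    and y: "y \<in> K" and v: "v \<in> V"
  shows "y \<otimes>\<^bsub>G\<^esub> v \<otimes>\<^bsub>G\<^esub> inv\<^bsub>G\<^esub> y \<in> V" "\<psi> (y \<otimes>\<^bsub>G\<^esub> v \<otimes>\<^bsub>G\<^esub> inv\<^bsub>G\<^esub> y) = \<psi> v"
proof -
  interpret G: group G by (rule G)
  interpret A: comm_group A by (rule A)
  have V: "subgroup V G" and VK: "V \<subseteq> K" and ps: "mhom G A V \<psi>" using I by (auto simp: ext_inv_def)
  have vK: "v \<in> K" using v VK by blast
  have yc: "y \<in> carrier G" using y K subgroup.subset by blast
  have vc: "v \<in> carrier G" using vK K subgroup.subset by blast
  define c where "c = y \<otimes>\<^bsub>G\<^esub> v \<otimes>\<^bsub>G\<^esub> inv\<^bsub>G\<^esub> y \<otimes>\<^bsub>G\<^esub> inv\<^bsub>G\<^esub> v"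
  have cV: "c \<in> V" using I y vK by (auto simp: ext_inv_def c_def)
  have c1: "\<psi> c = \<one>\<^bsub>A\<^esub>" using I y vK by (auto simp: ext_inv_def c_def)
  have eq: "y \<otimes>\<^bsub>G\<^esub> v \<otimes>\<^bsub>G\<^esub> inv\<^bsub>G\<^esub> y = c \<otimes>\<^bsub>G\<^esub> v"
    using yc vc by (simp add: c_def G.m_assoc)
  show "y \<otimes>\<^bsub>G\<^esub> v \<otimes>\<^bsub>G\<^esub> inv\<^bsub>G\<^esub> y \<in> V" using eq cV v V by (simp add: subgroup.m_closed)
  have "\<psi> (c \<otimes>\<^bsub>G\<^esub> v) = \<psi> c \<otimes>\<^bsub>A\<^esub> \<psi> v" using ps cV v by (simp add: mhom_def)
  also have "\<dots> = \<psi> v" using c1 mhom_props(5)[OF G A.is_group V ps v] by simp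
  finally show "\<psi> (y \<otimes>\<^bsub>G\<^esub> v \<otimes>\<^bsub>G\<^esub> inv\<^bsub>G\<^esub> y) = \<psi> v" using eq by simp
qed


lemma ext_prod:
  assumes G: "group G" and A: "comm_group A" and K: "subgroup K G" and I: "ext_inv G A K V \<psi>"
    and S: "subgroup S G" and SK: "S \<subseteq> K" and ch: "mhom G A S \<chi>"
    and agree: "\<forall>z\<in>V \<inter> S. \<psi> z = \<chi> z"
  shows "\<exists>\<theta>. ext_inv G A K {v \<otimes>\<^bsub>G\<^esub> s | v s. v \<in> V \<and> s \<in> S} \<theta> \<and> (\<forall>v\<in>V. \<theta> v = \<psi> v) \<and> (\<forall>s\<in>S. \<theta> s = \<chi> s)"
proof -
  interpret G: group G by (rule G)
  interpret A: comm_group A by (rule A)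
  define VS where "VS = {v \<otimes>\<^bsub>G\<^esub> s | v s. v \<in> V \<and> s \<in> S}"
  have V: "subgroup V G" and VK: "V \<subseteq> K" and ps: "mhom G A V \<psi>" 
    and cm: "\<forall>x\<in>K. \<forall>y\<in>K. x \<otimes>\<^bsub>G\<^esub> y \<otimes>\<^bsub>G\<^esub> inv\<^bsub>G\<^esub> x \<otimes>\<^bsub>G\<^esub> inv\<^bsub>G\<^esub> y \<in> V"
    and cm1: "\<forall>x\<in>K. \<forall>y\<in>K. \<psi> (x \<otimes>\<^bsub>G\<^esub> y \<otimes>\<^bsub>G\<^esub> inv\<^bsub>G\<^esub> x \<otimes>\<^bsub>G\<^esub> inv\<^bsub>G\<^esub> y) = \<one>\<^bsub>A\<^esub>"
    using I by (auto simp: ext_inv_def)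
  have Kc: "K \<subseteq> carrier G" using K subgroup.subset by blast
  have Vc: "\<And>v. v \<in> V \<Longrightarrow> v \<in> carrier G" using VK Kc by blast
  have Sc: "\<And>v. v \<in> S \<Longrightarrow> v \<in> carrier G" using SK Kc by blast
  have psc: "\<And>v. v \<in> V \<Longrightarrow> \<psi> v \<in> carrier A" using mhom_props(5)[OF G A.is_group V ps] .
  have chc: "\<And>v. v \<in> S \<Longrightarrow> \<chi> v \<in> carrier A" using mhom_props(5)[OF G A.is_group S ch] .
  have psm: "\<And>x y. x \<in> V \<Longrightarrow> y \<in> V \<Longrightarrow> \<psi> (x \<otimes>\<^bsub>G\<^esub> y) = \<psi> x \<otimes>\<^bsub>A\<^esub> \<psi> y" using ps by (simp add: mhom_def)
  have chm: "\<And>x y. x \<in> S \<Longrightarrow> y \<in> S \<Longrightarrow> \<chi> (x \<otimes>\<^bsub>G\<^esub> y) = \<chi> x \<otimes>\<^bsub>A\<^esub> \<chi> y" using ch by (simp add: mhom_def)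
  have wd: "\<psi> v \<otimes>\<^bsub>A\<^esub> \<chi> s = \<psi> v' \<otimes>\<^bsub>A\<^esub> \<chi> s'"
    if v: "v \<in> V" "v' \<in> V" and s: "s \<in> S" "s' \<in> S" and e: "v \<otimes>\<^bsub>G\<^esub> s = v' \<otimes>\<^bsub>G\<^esub> s'" for v v' s s'
  proof -
    have c: "v \<in> carrier G" "v' \<in> carrier G" "s \<in> carrier G" "s' \<in> carrier G" using v s Vc Sc by auto
    have "inv\<^bsub>G\<^esub> v' \<otimes>\<^bsub>G\<^esub> v = inv\<^bsub>G\<^esub> v' \<otimes>\<^bsub>G\<^esub> (v \<otimes>\<^bsub>G\<^esub> s) \<otimes>\<^bsub>G\<^esub> inv\<^bsub>G\<^esub> s"
      using c by (simp add: G.m_assoc)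
    also have "\<dots> = s' \<otimes>\<^bsub>G\<^esub> inv\<^bsub>G\<^esub> s" using c e by simp
    finally have z: "inv\<^bsub>G\<^esub> v' \<otimes>\<^bsub>G\<^esub> v = s' \<otimes>\<^bsub>G\<^esub> inv\<^bsub>G\<^esub> s" .
    have zV: "inv\<^bsub>G\<^esub> v' \<otimes>\<^bsub>G\<^esub> v \<in> V" using v V by (simp add: subgroup.m_closed subgroup.m_inv_closed)
    have zS: "s' \<otimes>\<^bsub>G\<^esub> inv\<^bsub>G\<^esub> s \<in> S" using s S by (simp add: subgroup.m_closed subgroup.m_inv_closed)
    have "\<psi> (inv\<^bsub>G\<^esub> v' \<otimes>\<^bsub>G\<^esub> v) = \<chi> (s' \<otimes>\<^bsub>G\<^esub> inv\<^bsub>G\<^esub> s)" using agree zV zS z by auto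
    moreover have "\<psi> (inv\<^bsub>G\<^esub> v' \<otimes>\<^bsub>G\<^esub> v) = inv\<^bsub>A\<^esub> \<psi> v' \<otimes>\<^bsub>A\<^esub> \<psi> v"
      using psm[OF subgroup.m_inv_closed[OF V v(2)] v(1)] mhom_props(2)[OF G A.is_group V ps v(2)] by simp
    moreover have "\<chi> (s' \<otimes>\<^bsub>G\<^esub> inv\<^bsub>G\<^esub> s) = \<chi> s' \<otimes>\<^bsub>A\<^esub> inv\<^bsub>A\<^esub> \<chi> s"
      using chm[OF s(2) subgroup.m_inv_closed[OF S s(1)]] mhom_props(2)[OF G A.is_group S ch s(1)] by simp
    ultimately have "inv\<^bsub>A\<^esub> \<psi> v' \<otimes>\<^bsub>A\<^esub> \<psi> v = \<chi> s' \<otimes>\<^bsub>A\<^esub> inv\<^bsub>A\<^esub> \<chi> s" by simp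
    thus ?thesis by (rule A.cg1[OF psc chc psc chc, OF v(1) s(1) v(2) s(2)])
  qed
  define \<theta> where "\<theta> z = (SOME r. \<exists>v s. v \<in> V \<and> s \<in> S \<and> z = v \<otimes>\<^bsub>G\<^esub> s \<and> r = \<psi> v \<otimes>\<^bsub>A\<^esub> \<chi> s)" for z
  have th: "\<theta> (v \<otimes>\<^bsub>G\<^esub> s) = \<psi> v \<otimes>\<^bsub>A\<^esub> \<chi> s" if "v \<in> V" "s \<in> S" for v s
  proof -
    let ?P = "\<lambda>r. \<exists>v' s'. v' \<in> V \<and> s' \<in> S \<and> v \<otimes>\<^bsub>G\<^esub> s = v' \<otimes>\<^bsub>G\<^esub> s' \<and> r = \<psi> v' \<otimes>\<^bsub>A\<^esub> \<chi> s'"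
    have "?P (\<psi> v \<otimes>\<^bsub>A\<^esub> \<chi> s)" using that by blast
    hence "?P (SOME r. ?P r)" by (rule someI)
    then obtain v' s' where "v' \<in> V" "s' \<in> S" "v \<otimes>\<^bsub>G\<^esub> s = v' \<otimes>\<^bsub>G\<^esub> s'" "(SOME r. ?P r) = \<psi> v' \<otimes>\<^bsub>A\<^esub> \<chi> s'"
      by blast
    thus ?thesis using wd[OF that(1) \<open>v' \<in> V\<close> that(2) \<open>s' \<in> S\<close>] by (simp add: \<theta>_def)
  qed
  have one_V: "\<one>\<^bsub>G\<^esub> \<in> V" and one_S: "\<one>\<^bsub>G\<^esub> \<in> S" using V S subgroup.one_closed by auto
  have thV: "\<theta> v = \<psi> v" if "v \<in> V" for v
    using th[OF that one_S] that Vc psc mhom_props(1)[OF G A.is_group S ch] by simp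
  have thS: "\<theta> s = \<chi> s" if "s \<in> S" for s
    using th[OF one_V that] that Sc chc mhom_props(1)[OF G A.is_group V ps] by simp
  have conjV: "y \<otimes>\<^bsub>G\<^esub> v \<otimes>\<^bsub>G\<^esub> inv\<^bsub>G\<^esub> y \<in> V" "\<psi> (y \<otimes>\<^bsub>G\<^esub> v \<otimes>\<^bsub>G\<^esub> inv\<^bsub>G\<^esub> y) = \<psi> v"
    if "y \<in> K" "v \<in> V" for y v
    using ext_inv_conj[OF G A K I that] by auto
  have prodid: "v \<otimes>\<^bsub>G\<^esub> s \<otimes>\<^bsub>G\<^esub> (v' \<otimes>\<^bsub>G\<^esub> s') = (v \<otimes>\<^bsub>G\<^esub> (s \<otimes>\<^bsub>G\<^esub> v' \<otimes>\<^bsub>G\<^esub> inv\<^bsub>G\<^esub> s)) \<otimes>\<^bsub>G\<^esub> (s \<otimes>\<^bsub>G\<^esub> s')"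
    if "v \<in> carrier G" "s \<in> carrier G" "v' \<in> carrier G" "s' \<in> carrier G" for v s v' s'
    using that by (simp add: G.m_assoc)
  have invid: "inv\<^bsub>G\<^esub> (v \<otimes>\<^bsub>G\<^esub> s) = (inv\<^bsub>G\<^esub> s \<otimes>\<^bsub>G\<^esub> inv\<^bsub>G\<^esub> v \<otimes>\<^bsub>G\<^esub> inv\<^bsub>G\<^esub> (inv\<^bsub>G\<^esub> s)) \<otimes>\<^bsub>G\<^esub> inv\<^bsub>G\<^esub> s"
    if "v \<in> carrier G" "s \<in> carrier G" for v s
    using that by (simp add: G.m_assoc G.inv_mult_group)
  have memVS: "v \<otimes>\<^bsub>G\<^esub> s \<in> VS" if "v \<in> V" "s \<in> S" for v s
    using that unfolding VS_def by blast
  have sgVS: "subgroup VS G"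
  proof (rule G.subgroupI)
    show "VS \<subseteq> carrier G"
    proof
      fix z assume "z \<in> VS"
      then obtain v s where "v \<in> V" "s \<in> S" "z = v \<otimes>\<^bsub>G\<^esub> s" unfolding VS_def by blast
      thus "z \<in> carrier G" using Vc Sc by simp
    qed
    show "VS \<noteq> {}" using memVS[OF one_V one_S] by blast
  next
    fix a assume "a \<in> VS"
    then obtain v s where vs: "v \<in> V" "s \<in> S" "a = v \<otimes>\<^bsub>G\<^esub> s" unfolding VS_def by blast
    have isS: "inv\<^bsub>G\<^esub> s \<in> S" using subgroup.m_inv_closed[OF S vs(2)] .
    have "inv\<^bsub>G\<^esub> s \<otimes>\<^bsub>G\<^esub> inv\<^bsub>G\<^esub> v \<otimes>\<^bsub>G\<^esub> inv\<^bsub>G\<^esub> (inv\<^bsub>G\<^esub> s) \<in> V"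
      using conjV(1)[OF subsetD[OF SK isS] subgroup.m_inv_closed[OF V vs(1)]] .
    hence "(inv\<^bsub>G\<^esub> s \<otimes>\<^bsub>G\<^esub> inv\<^bsub>G\<^esub> v \<otimes>\<^bsub>G\<^esub> inv\<^bsub>G\<^esub> (inv\<^bsub>G\<^esub> s)) \<otimes>\<^bsub>G\<^esub> inv\<^bsub>G\<^esub> s \<in> VS"
      using memVS isS by blast
    moreover have "inv\<^bsub>G\<^esub> a = (inv\<^bsub>G\<^esub> s \<otimes>\<^bsub>G\<^esub> inv\<^bsub>G\<^esub> v \<otimes>\<^bsub>G\<^esub> inv\<^bsub>G\<^esub> (inv\<^bsub>G\<^esub> s)) \<otimes>\<^bsub>G\<^esub> inv\<^bsub>G\<^esub> s"
      unfolding vs(3) by (rule invid[OF Vc[OF vs(1)] Sc[OF vs(2)]])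
    ultimately show "inv\<^bsub>G\<^esub> a \<in> VS" by simp
  next
    fix a b assume "a \<in> VS" "b \<in> VS"
    then obtain v s v' s' where vs: "v \<in> V" "s \<in> S" "a = v \<otimes>\<^bsub>G\<^esub> s" "v' \<in> V" "s' \<in> S" "b = v' \<otimes>\<^bsub>G\<^esub> s'"
      unfolding VS_def by blast
    have "v \<otimes>\<^bsub>G\<^esub> (s \<otimes>\<^bsub>G\<^esub> v' \<otimes>\<^bsub>G\<^esub> inv\<^bsub>G\<^esub> s) \<in> V"
      using subgroup.m_closed[OF V vs(1) conjV(1)[OF subsetD[OF SK vs(2)] vs(4)]] .
    moreover have "s \<otimes>\<^bsub>G\<^esub> s' \<in> S" using subgroup.m_closed[OF S vs(2) vs(5)] .
    ultimately have "(v \<otimes>\<^bsub>G\<^esub> (s \<otimes>\<^bsub>G\<^esub> v' \<otimes>\<^bsub>G\<^esub> inv\<^bsub>G\<^esub> s)) \<otimes>\<^bsub>G\<^esub> (s \<otimes>\<^bsub>G\<^esub> s') \<in> VS"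
      by (rule memVS)
    moreover have "a \<otimes>\<^bsub>G\<^esub> b = (v \<otimes>\<^bsub>G\<^esub> (s \<otimes>\<^bsub>G\<^esub> v' \<otimes>\<^bsub>G\<^esub> inv\<^bsub>G\<^esub> s)) \<otimes>\<^bsub>G\<^esub> (s \<otimes>\<^bsub>G\<^esub> s')"
      unfolding vs(3,6) by (rule prodid[OF Vc[OF vs(1)] Sc[OF vs(2)] Vc[OF vs(4)] Sc[OF vs(5)]])
    ultimately show "a \<otimes>\<^bsub>G\<^esub> b \<in> VS" by simp
  qed
  have mh: "mhom G A VS \<theta>"
    unfolding mhom_def
  proof (intro conjI ballI Pi_I)
    fix a assume "a \<in> VS"
    then obtain v s where vs: "v \<in> V" "s \<in> S" "a = v \<otimes>\<^bsub>G\<^esub> s" unfolding VS_def by blast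
    thus "\<theta> a \<in> carrier A" using th psc chc by simp
  next
    fix a b assume "a \<in> VS" "b \<in> VS"
    then obtain v s v' s' where vs: "v \<in> V" "s \<in> S" "a = v \<otimes>\<^bsub>G\<^esub> s" "v' \<in> V" "s' \<in> S" "b = v' \<otimes>\<^bsub>G\<^esub> s'"
      unfolding VS_def by blast
    have c1: "s \<otimes>\<^bsub>G\<^esub> v' \<otimes>\<^bsub>G\<^esub> inv\<^bsub>G\<^esub> s \<in> V" "\<psi> (s \<otimes>\<^bsub>G\<^esub> v' \<otimes>\<^bsub>G\<^esub> inv\<^bsub>G\<^esub> s) = \<psi> v'"
      using conjV[OF subsetD[OF SK vs(2)] vs(4)] by auto
    have c2: "s \<otimes>\<^bsub>G\<^esub> s' \<in> S" using subgroup.m_closed[OF S vs(2) vs(5)] .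
    have "\<theta> (a \<otimes>\<^bsub>G\<^esub> b) = \<theta> ((v \<otimes>\<^bsub>G\<^esub> (s \<otimes>\<^bsub>G\<^esub> v' \<otimes>\<^bsub>G\<^esub> inv\<^bsub>G\<^esub> s)) \<otimes>\<^bsub>G\<^esub> (s \<otimes>\<^bsub>G\<^esub> s'))"
      unfolding vs(3,6) by (rule arg_cong[where f=\<theta>, OF prodid[OF Vc[OF vs(1)] Sc[OF vs(2)] Vc[OF vs(4)] Sc[OF vs(5)]]])
    also have "\<dots> = \<psi> (v \<otimes>\<^bsub>G\<^esub> (s \<otimes>\<^bsub>G\<^esub> v' \<otimes>\<^bsub>G\<^esub> inv\<^bsub>G\<^esub> s)) \<otimes>\<^bsub>A\<^esub> \<chi> (s \<otimes>\<^bsub>G\<^esub> s')"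
      using th[OF subgroup.m_closed[OF V vs(1) c1(1)] c2] .
    also have "\<dots> = (\<psi> v \<otimes>\<^bsub>A\<^esub> \<psi> v') \<otimes>\<^bsub>A\<^esub> (\<chi> s \<otimes>\<^bsub>A\<^esub> \<chi> s')"
      using psm[OF vs(1) c1(1)] c1(2) chm[OF vs(2) vs(5)] by simp
    also have "\<dots> = (\<psi> v \<otimes>\<^bsub>A\<^esub> \<chi> s) \<otimes>\<^bsub>A\<^esub> (\<psi> v' \<otimes>\<^bsub>A\<^esub> \<chi> s')"
      using psc chc vs by (simp add: A.m_ac)
    also have "\<dots> = \<theta> a \<otimes>\<^bsub>A\<^esub> \<theta> b" unfolding vs(3,6) th[OF vs(1,2)] th[OF vs(4,5)] ..
    finally show "\<theta> (a \<otimes>\<^bsub>G\<^esub> b) = \<theta> a \<otimes>\<^bsub>A\<^esub> \<theta> b" .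
  qed
  have VVS: "V \<subseteq> VS"
  proof
    fix v assume "v \<in> V" thus "v \<in> VS" using memVS[OF _ one_S, of v] Vc by simp
  qed
  have VSK: "VS \<subseteq> K"
  proof
    fix z assume "z \<in> VS"
    then obtain v s where "v \<in> V" "s \<in> S" "z = v \<otimes>\<^bsub>G\<^esub> s" unfolding VS_def by blast
    thus "z \<in> K" using VK SK subgroup.m_closed[OF K] by blast
  qed
  have "ext_inv G A K VS \<theta>"
    unfolding ext_inv_def
  proof (intro conjI ballI)
    fix x y assume "x \<in> K" "y \<in> K"
    thus "x \<otimes>\<^bsub>G\<^esub> y \<otimes>\<^bsub>G\<^esub> inv\<^bsub>G\<^esub> x \<otimes>\<^bsub>G\<^esub> inv\<^bsub>G\<^esub> y \<in> VS" using cm VVS by blast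
  next
    fix x y assume xy: "x \<in> K" "y \<in> K"
    have "x \<otimes>\<^bsub>G\<^esub> y \<otimes>\<^bsub>G\<^esub> inv\<^bsub>G\<^esub> x \<otimes>\<^bsub>G\<^esub> inv\<^bsub>G\<^esub> y \<in> V" using cm xy by blast
    thus "\<theta> (x \<otimes>\<^bsub>G\<^esub> y \<otimes>\<^bsub>G\<^esub> inv\<^bsub>G\<^esub> x \<otimes>\<^bsub>G\<^esub> inv\<^bsub>G\<^esub> y) = \<one>\<^bsub>A\<^esub>"
      using cm1 thV xy by simp
  qed (rule sgVS, rule VSK, rule mh)
  thus ?thesis using thV thS unfolding VS_def by blast
qed



lemma ext_cyc:
  assumes G: "group G" and A: "comm_group A" and x: "x \<in> carrier G" and V: "subgroup V G"
    and ps1: "\<psi> \<one>\<^bsub>G\<^esub> = \<one>\<^bsub>A\<^esub>" and t: "t \<in> carrier A"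
    and H: "\<forall>i::int. x [^]\<^bsub>G\<^esub> i \<in> V \<longrightarrow> \<psi> (x [^]\<^bsub>G\<^esub> i) = t [^]\<^bsub>A\<^esub> i"
  shows "\<exists>\<chi>. mhom G A (generate G {x}) \<chi> \<and> (\<forall>z\<in>V \<inter> generate G {x}. \<psi> z = \<chi> z)
     \<and> (\<forall>i::int. \<chi> (x [^]\<^bsub>G\<^esub> i) = t [^]\<^bsub>A\<^esub> i)"
proof -
  interpret G: group G by (rule G)
  interpret A: comm_group A by (rule A)
  have gen: "generate G {x} = {x [^]\<^bsub>G\<^esub> k | k::int. k \<in> UNIV}" by (rule G.generate_pow[OF x])
  have key: "t [^]\<^bsub>A\<^esub> i = t [^]\<^bsub>A\<^esub> j" if e: "x [^]\<^bsub>G\<^esub> i = x [^]\<^bsub>G\<^esub> j" for i j :: int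
  proof -
    have "x [^]\<^bsub>G\<^esub> (i - j) = \<one>\<^bsub>G\<^esub>" using G.int_pow_diff[OF x, of i j] e x by simp
    hence "t [^]\<^bsub>A\<^esub> (i - j) = \<one>\<^bsub>A\<^esub>" using H V subgroup.one_closed ps1 by metis
    hence "t [^]\<^bsub>A\<^esub> i \<otimes>\<^bsub>A\<^esub> inv\<^bsub>A\<^esub> (t [^]\<^bsub>A\<^esub> j) = \<one>\<^bsub>A\<^esub>" using A.int_pow_diff[OF t] by simp
    thus ?thesis using t A.inv_solve_right'[of "\<one>\<^bsub>A\<^esub>" "t [^]\<^bsub>A\<^esub> i" "t [^]\<^bsub>A\<^esub> j"] by simp
  qed
  define \<chi> where "\<chi> z = t [^]\<^bsub>A\<^esub> (SOME i::int. z = x [^]\<^bsub>G\<^esub> i)" for z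
  have chi: "\<chi> (x [^]\<^bsub>G\<^esub> i) = t [^]\<^bsub>A\<^esub> i" for i :: int
  proof -
    have "x [^]\<^bsub>G\<^esub> i = x [^]\<^bsub>G\<^esub> (SOME j::int. x [^]\<^bsub>G\<^esub> i = x [^]\<^bsub>G\<^esub> j)"
      by (rule someI[of "\<lambda>j. x [^]\<^bsub>G\<^esub> i = x [^]\<^bsub>G\<^esub> j" i]) simp
    from key[OF this] show ?thesis by (simp add: \<chi>_def)
  qed
  have "mhom G A (generate G {x}) \<chi>"
    unfolding mhom_def gen
  proof (intro conjI ballI Pi_I)
    fix z assume "z \<in> {x [^]\<^bsub>G\<^esub> k | k::int. k \<in> UNIV}"
    then obtain i :: int where "z = x [^]\<^bsub>G\<^esub> i" by blast
    thus "\<chi> z \<in> carrier A" using chi t by simp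
  next
    fix y z assume "y \<in> {x [^]\<^bsub>G\<^esub> k | k::int. k \<in> UNIV}" "z \<in> {x [^]\<^bsub>G\<^esub> k | k::int. k \<in> UNIV}"
    then obtain i j :: int where ij: "y = x [^]\<^bsub>G\<^esub> i" "z = x [^]\<^bsub>G\<^esub> j" by blast
    have "y \<otimes>\<^bsub>G\<^esub> z = x [^]\<^bsub>G\<^esub> (i + j)" using ij G.int_pow_mult[OF x] by simp
    thus "\<chi> (y \<otimes>\<^bsub>G\<^esub> z) = \<chi> y \<otimes>\<^bsub>A\<^esub> \<chi> z" using ij chi A.int_pow_mult[OF t] by simp
  qed
  moreover have "\<forall>z\<in>V \<inter> generate G {x}. \<psi> z = \<chi> z"
  proof
    fix z assume "z \<in> V \<inter> generate G {x}"
    then obtain i :: int where "z = x [^]\<^bsub>G\<^esub> i" "z \<in> V" unfolding gen by blast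
    thus "\<psi> z = \<chi> z" using H chi by simp
  qed
  ultimately show ?thesis using chi by blast
qed



lemma least_pow_dvd:
  assumes G: "group G" and x: "x \<in> carrier G" and V: "subgroup V G"
    and kpos: "0 < k" and xk: "x [^]\<^bsub>G\<^esub> k \<in> V"
    and kmin: "\<And>n::nat. 0 < n \<Longrightarrow> n < k \<Longrightarrow> x [^]\<^bsub>G\<^esub> n \<notin> V"
    and i: "x [^]\<^bsub>G\<^esub> (i::int) \<in> V"
  shows "int k dvd i"
proof -
  interpret G: group G by (rule G)
  define q where "q = i div int k"
  define r where "r = i mod int k"
  have ir: "i = int k * q + r" by (simp add: q_def r_def)
  have r0: "0 \<le> r" "r < int k" using kpos by (simp_all add: r_def)
  have "x [^]\<^bsub>G\<^esub> i = (x [^]\<^bsub>G\<^esub> k) [^]\<^bsub>G\<^esub> q \<otimes>\<^bsub>G\<^esub> x [^]\<^bsub>G\<^esub> r"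
    using ir G.int_pow_mult[OF x] G.int_pow_pow[OF x] int_pow_int by metis
  hence "x [^]\<^bsub>G\<^esub> r = inv\<^bsub>G\<^esub> ((x [^]\<^bsub>G\<^esub> k) [^]\<^bsub>G\<^esub> q) \<otimes>\<^bsub>G\<^esub> x [^]\<^bsub>G\<^esub> i"
    using x by (simp add: G.inv_solve_left)
  moreover have "(x [^]\<^bsub>G\<^esub> k) [^]\<^bsub>G\<^esub> q \<in> V" using G.subgroup_int_pow_closed[OF V xk] .
  ultimately have "x [^]\<^bsub>G\<^esub> r \<in> V" using i V by (simp add: subgroup.m_closed subgroup.m_inv_closed)
  hence "x [^]\<^bsub>G\<^esub> (nat r) \<in> V" using r0 int_pow_int[where x=x and n="nat r" and G=G] by simp
  hence "nat r = 0" using kmin r0 by (metis gr0I nat_less_iff)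
  hence "r = 0" using r0 by simp
  thus ?thesis using ir by simp
qed

lemma ext_main:
  assumes G: "group G" and fin: "finite (carrier G)" and A: "comm_group A"
    and hyp: "satisfies_hypothesis A \<pi>" and K: "subgroup K G"
  shows "ext_inv G A K V \<psi> \<Longrightarrow> \<exists>\<theta>. mhom G A K \<theta> \<and> (\<forall>v\<in>V. \<theta> v = \<psi> v)"
proof -
  interpret G: group G by (rule G)
  interpret A: comm_group A by (rule A)
  have Kc: "K \<subseteq> carrier G" using K subgroup.subset by blast
  have finK: "finite K" using fin Kc finite_subset by blast
  have ord: "0 < order G" using fin G.order_gt_0_iff_finite by blast
  have main: "\<forall>V \<psi>. card K - card V = n \<longrightarrow> ext_inv G A K V \<psi> \<longrightarrow> (\<exists>\<theta>. mhom G A K \<theta> \<and> (\<forall>v\<in>V. \<theta> v = \<psi> v))" for n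
  proof (induction n rule: less_induct)
    case (less n)
    show ?case
    proof (intro allI impI)
      fix V \<psi> assume n: "card K - card V = n" and I: "ext_inv G A K V \<psi>"
      have V: "subgroup V G" and VK: "V \<subseteq> K" and ps: "mhom G A V \<psi>" using I by (auto simp: ext_inv_def)
      show "\<exists>\<theta>. mhom G A K \<theta> \<and> (\<forall>v\<in>V. \<theta> v = \<psi> v)"
      proof (cases "V = K")
        case True thus ?thesis using ps by blast
      next
        case False
        then obtain x where xK: "x \<in> K" and xV: "x \<notin> V" using VK by blast
        have x: "x \<in> carrier G" using xK Kc by blast
        have ex: "\<exists>n::nat. 0 < n \<and> x [^]\<^bsub>G\<^esub> n \<in> V"
        proof -
          have "x [^]\<^bsub>G\<^esub> order G \<in> V" using G.pow_order_eq_1[OF x] subgroup.one_closed[OF V] by simp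
          thus ?thesis using ord by blast
        qed
        define k where "k = (LEAST n::nat. 0 < n \<and> x [^]\<^bsub>G\<^esub> n \<in> V)"
        have kk: "0 < k \<and> x [^]\<^bsub>G\<^esub> k \<in> V" unfolding k_def by (rule LeastI_ex[OF ex])
        have kmin: "x [^]\<^bsub>G\<^esub> m \<notin> V" if "0 < m" "m < k" for m :: nat
          using not_less_Least[of m "\<lambda>n. 0 < n \<and> x [^]\<^bsub>G\<^esub> n \<in> V"] that unfolding k_def by blast
        have dv: "int k dvd i" if "x [^]\<^bsub>G\<^esub> (i::int) \<in> V" for i
          by (rule least_pow_dvd[OF G x V _ _ kmin that]) (use kk in auto)
        define a where "a = \<psi> (x [^]\<^bsub>G\<^esub> k)"
        have a: "a \<in> carrier A" unfolding a_def using mhom_props(5)[OF G A.is_group V ps] kk by blast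
        have "a [^]\<^bsub>A\<^esub> order G = \<psi> ((x [^]\<^bsub>G\<^esub> k) [^]\<^bsub>G\<^esub> order G)"
          unfolding a_def using mhom_props(4)[OF G A.is_group V ps] kk by simp
        also have "\<dots> = \<one>\<^bsub>A\<^esub>" using G.pow_order_eq_1[of "x [^]\<^bsub>G\<^esub> k"] x mhom_props(1)[OF G A.is_group V ps] by simp
        finally have aord: "a [^]\<^bsub>A\<^esub> order G = \<one>\<^bsub>A\<^esub>" .
        obtain t where t: "t \<in> carrier A" "t [^]\<^bsub>A\<^esub> k = a"
          using A.root_exists[OF hyp a aord ord] kk by blast
        have H: "\<forall>i::int. x [^]\<^bsub>G\<^esub> i \<in> V \<longrightarrow> \<psi> (x [^]\<^bsub>G\<^esub> i) = t [^]\<^bsub>A\<^esub> i"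
        proof (intro allI impI)
          fix i :: int assume iV: "x [^]\<^bsub>G\<^esub> i \<in> V"
          then obtain q where q: "i = int k * q" using dv by (meson dvdE)
          have "x [^]\<^bsub>G\<^esub> i = (x [^]\<^bsub>G\<^esub> k) [^]\<^bsub>G\<^esub> q"
            using q G.int_pow_pow[OF x] int_pow_int by metis
          hence "\<psi> (x [^]\<^bsub>G\<^esub> i) = a [^]\<^bsub>A\<^esub> q"
            unfolding a_def using mhom_props(3)[OF G A.is_group V ps] kk by simp
          also have "\<dots> = t [^]\<^bsub>A\<^esub> i"
            using q A.int_pow_pow[OF t(1)] int_pow_int t(2) by metis
          finally show "\<psi> (x [^]\<^bsub>G\<^esub> i) = t [^]\<^bsub>A\<^esub> i" .
        qed
        obtain \<chi> where ch: "mhom G A (generate G {x}) \<chi>" and agree: "\<forall>z\<in>V \<inter> generate G {x}. \<psi> z = \<chi> z"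
          using ext_cyc[OF G A x V mhom_props(1)[OF G A.is_group V ps] t(1) H] by blast
        have S: "subgroup (generate G {x}) G" using G.generate_is_subgroup x by simp
        have SK: "generate G {x} \<subseteq> K" using G.generate_subgroup_incl[OF _ K] xK by simp
        obtain \<theta>' where th': "ext_inv G A K {v \<otimes>\<^bsub>G\<^esub> s | v s. v \<in> V \<and> s \<in> generate G {x}} \<theta>'"
          and thV: "\<forall>v\<in>V. \<theta>' v = \<psi> v"
          using ext_prod[OF G A K I S SK ch agree] by blast
        define VS where "VS = {v \<otimes>\<^bsub>G\<^esub> s | v s. v \<in> V \<and> s \<in> generate G {x}}"
        have VSK: "VS \<subseteq> K" using th' unfolding VS_def ext_inv_def by blast
        have VVS: "V \<subseteq> VS"
        proof
          fix v assume "v \<in> V"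
          moreover have "\<one>\<^bsub>G\<^esub> \<in> generate G {x}" by (rule generate.one)
          ultimately have "v \<otimes>\<^bsub>G\<^esub> \<one>\<^bsub>G\<^esub> \<in> VS" unfolding VS_def by blast
          thus "v \<in> VS" using \<open>v \<in> V\<close> V subgroup.subset by force
        qed
        have xVS: "x \<in> VS"
        proof -
          have "x \<in> generate G {x}" by (rule generate.incl) simp
          hence "\<one>\<^bsub>G\<^esub> \<otimes>\<^bsub>G\<^esub> x \<in> VS" unfolding VS_def using V subgroup.one_closed by blast
          thus ?thesis using x by simp
        qed
        have "card V < card VS"
          by (rule psubset_card_mono) (use finK VSK finite_subset VVS xVS xV in auto)
        moreover have "card VS \<le> card K" by (rule card_mono[OF finK VSK])
        ultimately have lt: "card K - card VS < n" using n by linarith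
        obtain \<theta> where th1: "mhom G A K \<theta>" and th2: "\<forall>v\<in>VS. \<theta> v = \<theta>' v"
          using less[rule_format, OF lt refl th'[folded VS_def]] by blast
        have "\<forall>v\<in>V. \<theta> v = \<psi> v"
        proof
          fix v assume v: "v \<in> V"
          hence "v \<in> VS" using VVS by blast
          hence "\<theta> v = \<theta>' v" using th2 by blast
          thus "\<theta> v = \<psi> v" using thV v by simp
        qed
        thus ?thesis using th1 by blast
      qed
    qed
  qed
  thus "ext_inv G A K V \<psi> \<Longrightarrow> \<exists>\<theta>. mhom G A K \<theta> \<and> (\<forall>v\<in>V. \<theta> v = \<psi> v)" by blast
qed



lemma card_sub_dvd:
  assumes G: "group G" and L: "subgroup L G" and M: "subgroup M G" and LM: "L \<subseteq> M" and fin: "finite M"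
  shows "card L dvd card M"
proof -
  interpret G: group G by (rule G)
  interpret M': group "subgroup_generated G M" by simp
  have cM: "carrier (subgroup_generated G M) = M" by (rule subgroup.carrier_subgroup_generated_subgroup[OF M])
  have "subgroup L (subgroup_generated G M)" using G.subgroup_of_subgroup_generated[OF LM L] .
  from M'.lagrange[OF this] have "card (rcosets\<^bsub>subgroup_generated G M\<^esub> L) * card L = card M"
    by (simp add: order_def cM)
  thus ?thesis by (metis dvd_triv_right)
qed

lemma (in comm_group) cg2:
  assumes "a \<in> carrier G" "b \<in> carrier G" shows "a \<otimes> b \<otimes> inv a \<otimes> inv b = \<one>"
proof -
  have "a \<otimes> b \<otimes> inv a \<otimes> inv b = (a \<otimes> b) \<otimes> inv (b \<otimes> a)" using assms by (simp add: m_assoc inv_mult_group)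
  also have "\<dots> = \<one>" using assms by (simp add: m_comm[of b a])
  finally show ?thesis .
qed

lemma mhom_kills_derived:
  assumes G: "group G" and A: "comm_group A" and U: "subgroup U G" and f: "mhom G A U f"
  shows "\<forall>z\<in>derived G U. f z = \<one>\<^bsub>A\<^esub>"
proof -
  interpret G: group G by (rule G)
  interpret A: comm_group A by (rule A)
  have Uc: "U \<subseteq> carrier G" using U subgroup.subset by blast
  have fc: "\<And>x. x \<in> U \<Longrightarrow> f x \<in> carrier A" using mhom_props(5)[OF G A.is_group U f] .
  have fm: "\<And>x y. x \<in> U \<Longrightarrow> y \<in> U \<Longrightarrow> f (x \<otimes>\<^bsub>G\<^esub> y) = f x \<otimes>\<^bsub>A\<^esub> f y" using f by (simp add: mhom_def)
  have fi: "\<And>x. x \<in> U \<Longrightarrow> f (inv\<^bsub>G\<^esub> x) = inv\<^bsub>A\<^esub> f x" using mhom_props(2)[OF G A.is_group U f] .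
  define K0 where "K0 = {u\<in>U. f u = \<one>\<^bsub>A\<^esub>}"
  have K0: "subgroup K0 G"
  proof (rule G.subgroupI)
    show "K0 \<subseteq> carrier G" using Uc K0_def by blast
    show "K0 \<noteq> {}" using subgroup.one_closed[OF U] mhom_props(1)[OF G A.is_group U f] K0_def by blast
  next
    fix a assume "a \<in> K0" thus "inv\<^bsub>G\<^esub> a \<in> K0" using fi subgroup.m_inv_closed[OF U] K0_def by auto
  next
    fix a b assume "a \<in> K0" "b \<in> K0" thus "a \<otimes>\<^bsub>G\<^esub> b \<in> K0" using fm subgroup.m_closed[OF U] K0_def by auto
  qed
  have "derived_set G U \<subseteq> K0"
  proof
    fix z assume "z \<in> derived_set G U"
    then obtain x y where xy: "x \<in> U" "y \<in> U" "z = x \<otimes>\<^bsub>G\<^esub> y \<otimes>\<^bsub>G\<^esub> inv\<^bsub>G\<^esub> x \<otimes>\<^bsub>G\<^esub> inv\<^bsub>G\<^esub> y"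
      by blast
    have ix: "inv\<^bsub>G\<^esub> x \<in> U" and iy: "inv\<^bsub>G\<^esub> y \<in> U" using xy subgroup.m_inv_closed[OF U] by auto
    have zU: "z \<in> U" using xy ix iy subgroup.m_closed[OF U] by metis
    have "f z = f x \<otimes>\<^bsub>A\<^esub> f y \<otimes>\<^bsub>A\<^esub> inv\<^bsub>A\<^esub> f x \<otimes>\<^bsub>A\<^esub> inv\<^bsub>A\<^esub> f y"
      using xy ix iy fm fi subgroup.m_closed[OF U] by simp
    also have "\<dots> = \<one>\<^bsub>A\<^esub>" using fc xy A.cg2 by simp
    finally show "z \<in> K0" using zU K0_def by blast
  qed
  hence "derived G U \<subseteq> K0" unfolding derived_def by (rule G.generate_subgroup_incl[OF _ K0])
  thus ?thesis using K0_def by blast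
qed

lemma sylow_equiv:
  assumes G: "group G" and fin: "finite (carrier G)" and L: "subgroup L G" and M: "subgroup M G"
    and LM: "L \<subseteq> M" and p: "Factorial_Ring.prime (p::nat)"
  shows "(\<exists>P. sylow_subgroup_of G p P M \<and> P \<subseteq> L) \<longleftrightarrow> multiplicity p (card M) = multiplicity p (card L)"
proof -
  interpret G: group G by (rule G)
  have finM: "finite M" using fin M subgroup.subset finite_subset by blast
  have finL: "finite L" using fin L subgroup.subset finite_subset by blast
  have cL0: "card L \<noteq> 0" using finL subgroup.one_closed[OF L] by (auto simp: card_eq_0_iff)
  have cM0: "card M \<noteq> 0" using finM subgroup.one_closed[OF M] by (auto simp: card_eq_0_iff)
  have dLM: "card L dvd card M" by (rule card_sub_dvd[OF G L M LM finM])
  have le: "multiplicity p (card L) \<le> multiplicity p (card M)"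
    by (rule dvd_imp_multiplicity_le[OF dLM cM0])
  show ?thesis
  proof
    assume "\<exists>P. sylow_subgroup_of G p P M \<and> P \<subseteq> L"
    then obtain P where P: "subgroup P G" "card P = p ^ multiplicity p (card M)" "P \<subseteq> L"
      unfolding sylow_subgroup_of_def by blast
    have "card P dvd card L" by (rule card_sub_dvd[OF G P(1) L P(3) finL])
    hence "p ^ multiplicity p (card M) dvd card L" using P(2) by simp
    hence "multiplicity p (card M) \<le> multiplicity p (card L)"
      using power_dvd_iff_le_multiplicity[where p=p and n="multiplicity p (card M)" and x="card L"] p cL0 prime_gt_1_nat[OF p]
      by (simp add: prime_imp_prime_elem not_prime_unit)
    thus "multiplicity p (card M) = multiplicity p (card L)" using le by simp
  next
    assume eq: "multiplicity p (card M) = multiplicity p (card L)"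
    obtain m where m: "card L = p ^ multiplicity p (card L) * m" using multiplicity_dvd by (metis dvdE)
    interpret L': group "subgroup_generated G L" by simp
    have cL: "carrier (subgroup_generated G L) = L" by (rule subgroup.carrier_subgroup_generated_subgroup[OF L])
    have "order (subgroup_generated G L) = p ^ multiplicity p (card L) * m" using m cL by (simp add: order_def)
    from sylow_thm[OF p L'.is_group this] finL cL
    obtain P where P: "subgroup P (subgroup_generated G L)" "card P = p ^ multiplicity p (card L)" by auto
    have "subgroup P G" "P \<subseteq> L" using P(1) G.subgroup_subgroup_generated_iff cL by auto
    hence "sylow_subgroup_of G p P M \<and> P \<subseteq> L" using P(2) eq LM unfolding sylow_subgroup_of_def by auto
    thus "\<exists>P. sylow_subgroup_of G p P M \<and> P \<subseteq> L" by blast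
  qed
qed



lemma subgroup_nat_pow_closed:
  assumes G: "group G" and S: "subgroup S G" and y: "y \<in> S"
  shows "y [^]\<^bsub>G\<^esub> (n::nat) \<in> S"
proof (induction n)
  case 0 thus ?case using subgroup.one_closed[OF S] by simp
next
  case (Suc n) thus ?case using subgroup.m_closed[OF S _ y] by simp
qed

lemma order_p_elem:
  assumes G: "group G" and fin: "finite (carrier G)" and D: "subgroup D G" and E: "subgroup E G"
    and DE: "D \<subseteq> E" and p: "Factorial_Ring.prime (p::nat)"
    and lt: "multiplicity p (card D) < multiplicity p (card E)"
  shows "\<exists>x\<in>E. x \<notin> D \<and> x [^]\<^bsub>G\<^esub> p \<in> D"
proof -
  interpret G: group G by (rule G)
  define a where "a = multiplicity p (card E)"
  have finE: "finite E" using fin E subgroup.subset finite_subset by blast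
  have finD: "finite D" using fin D subgroup.subset finite_subset by blast
  have cD0: "card D \<noteq> 0" using finD subgroup.one_closed[OF D] by (auto simp: card_eq_0_iff)
  obtain m where m: "card E = p ^ a * m" unfolding a_def using multiplicity_dvd by (metis dvdE)
  interpret E': group "subgroup_generated G E" by simp
  have cE: "carrier (subgroup_generated G E) = E" by (rule subgroup.carrier_subgroup_generated_subgroup[OF E])
  have "order (subgroup_generated G E) = p ^ a * m" using m cE by (simp add: order_def)
  from sylow_thm[OF p E'.is_group this] finE cE
  obtain S where S0: "subgroup S (subgroup_generated G E)" "card S = p ^ a" by auto
  have S: "subgroup S G" and SE: "S \<subseteq> E" using S0(1) G.subgroup_subgroup_generated_iff cE by auto
  have "\<not> S \<subseteq> D"
  proof
    assume "S \<subseteq> D"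
    hence "card S dvd card D" by (rule card_sub_dvd[OF G S D _ finD])
    hence "p ^ a dvd card D" using S0(2) by simp
    hence "a \<le> multiplicity p (card D)"
      using power_dvd_iff_le_multiplicity[where p=p and n=a and x="card D"] p cD0 prime_gt_1_nat[OF p]
      by (simp add: prime_imp_prime_elem not_prime_unit)
    thus False using lt a_def by simp
  qed
  then obtain y where yS: "y \<in> S" and yD: "y \<notin> D" by blast
  have yc: "y \<in> carrier G" using yS S subgroup.subset by blast
  interpret S': group "subgroup_generated G S" by simp
  have cS: "carrier (subgroup_generated G S) = S" by (rule subgroup.carrier_subgroup_generated_subgroup[OF S])
  have "y [^]\<^bsub>subgroup_generated G S\<^esub> order (subgroup_generated G S) = \<one>\<^bsub>subgroup_generated G S\<^esub>"
    using S'.pow_order_eq_1 yS cS by blast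
  hence ya: "y [^]\<^bsub>G\<^esub> (p ^ a) = \<one>\<^bsub>G\<^esub>" using cS S0(2) by (simp add: pow_subgroup_generated order_def)
  have "y [^]\<^bsub>G\<^esub> (p ^ a) \<in> D" using ya subgroup.one_closed[OF D] by simp
  hence ex: "\<exists>j::nat. y [^]\<^bsub>G\<^esub> (p ^ j) \<in> D" by blast
  define j where "j = (LEAST j::nat. y [^]\<^bsub>G\<^esub> (p ^ j) \<in> D)"
  have jD: "y [^]\<^bsub>G\<^esub> (p ^ j) \<in> D" unfolding j_def by (rule LeastI_ex[OF ex])
  have j0: "j \<noteq> 0"
  proof
    assume "j = 0" thus False using jD yD yc by simp
  qed
  define x where "x = y [^]\<^bsub>G\<^esub> (p ^ (j - 1))"
  have "j - 1 < j" using j0 by simp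
  hence "\<not> y [^]\<^bsub>G\<^esub> (p ^ (j - 1)) \<in> D"
    unfolding j_def by (rule not_less_Least)
  hence "x \<notin> D" unfolding x_def .
  moreover have "x [^]\<^bsub>G\<^esub> p \<in> D"
  proof -
    have "p ^ (j - 1) * p = p ^ j" using j0 by (cases j) auto
    thus ?thesis unfolding x_def using G.nat_pow_pow[OF yc] jD by simp
  qed
  moreover have "x \<in> E" unfolding x_def using subgroup_nat_pow_closed[OF G S yS] SE by blast
  ultimately show ?thesis by blast
qed



lemma fst_group_hom: "group G \<Longrightarrow> group H \<Longrightarrow> group_hom (G \<times>\<times> H) G fst"
  by (auto simp: group_hom_def group_hom_axioms_def hom_def DirProd_group mult_DirProd')

lemma snd_group_hom: "group G \<Longrightarrow> group H \<Longrightarrow> group_hom (G \<times>\<times> H) H snd"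
  by (auto simp: group_hom_def group_hom_axioms_def hom_def DirProd_group mult_DirProd')

lemma inl_group_hom: "group G \<Longrightarrow> group H \<Longrightarrow> group_hom G (G \<times>\<times> H) (\<lambda>g. (g, \<one>\<^bsub>H\<^esub>))"
  by (auto simp: group_hom_def group_hom_axioms_def hom_def DirProd_group group.is_monoid)

lemma inr_group_hom: "group G \<Longrightarrow> group H \<Longrightarrow> group_hom H (G \<times>\<times> H) (\<lambda>h. (\<one>\<^bsub>G\<^esub>, h))"
  by (auto simp: group_hom_def group_hom_axioms_def hom_def DirProd_group group.is_monoid)

lemma fst_derived:
  assumes "group G" "group H" "Xs \<subseteq> carrier (G \<times>\<times> H)"
  shows "fst ` derived (G \<times>\<times> H) Xs = derived G (fst ` Xs)"
  using group_hom.derived_img[OF fst_group_hom[OF assms(1,2)] assms(3)] by simp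

lemma snd_derived:
  assumes "group G" "group H" "Xs \<subseteq> carrier (G \<times>\<times> H)"
  shows "snd ` derived (G \<times>\<times> H) Xs = derived H (snd ` Xs)"
  using group_hom.derived_img[OF snd_group_hom[OF assms(1,2)] assms(3)] by simp

lemma inl_derived:
  assumes G: "group G" and H: "group H" and g: "g \<in> carrier G"
  shows "(g, \<one>\<^bsub>H\<^esub>) \<in> derived (G \<times>\<times> H) (carrier (G \<times>\<times> H)) \<longleftrightarrow> g \<in> derived G (carrier G)"
proof
  assume "(g, \<one>\<^bsub>H\<^esub>) \<in> derived (G \<times>\<times> H) (carrier (G \<times>\<times> H))"
  hence "g \<in> fst ` derived (G \<times>\<times> H) (carrier (G \<times>\<times> H))" by force
  moreover have "fst ` carrier (G \<times>\<times> H) = carrier G"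
    using group.is_monoid[OF H] monoid.one_closed by force
  ultimately show "g \<in> derived G (carrier G)" using fst_derived[OF G H] by simp
next
  assume "g \<in> derived G (carrier G)"
  hence "(g, \<one>\<^bsub>H\<^esub>) \<in> (\<lambda>g. (g, \<one>\<^bsub>H\<^esub>)) ` derived G (carrier G)" by blast
  also have "\<dots> = derived (G \<times>\<times> H) ((\<lambda>g. (g, \<one>\<^bsub>H\<^esub>)) ` carrier G)"
    using group_hom.derived_img[OF inl_group_hom[OF G H], of "carrier G"] by simp
  also have "\<dots> \<subseteq> derived (G \<times>\<times> H) (carrier (G \<times>\<times> H))"
    by (rule group.mono_derived[OF DirProd_group[OF G H]])
       (use group.is_monoid[OF H] monoid.one_closed in force)
  finally show "(g, \<one>\<^bsub>H\<^esub>) \<in> derived (G \<times>\<times> H) (carrier (G \<times>\<times> H))" .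
qed

lemma inr_derived:
  assumes G: "group G" and H: "group H" and h: "h \<in> carrier H"
  shows "(\<one>\<^bsub>G\<^esub>, h) \<in> derived (G \<times>\<times> H) (carrier (G \<times>\<times> H)) \<longleftrightarrow> h \<in> derived H (carrier H)"
proof
  assume "(\<one>\<^bsub>G\<^esub>, h) \<in> derived (G \<times>\<times> H) (carrier (G \<times>\<times> H))"
  hence "h \<in> snd ` derived (G \<times>\<times> H) (carrier (G \<times>\<times> H))" by force
  moreover have "snd ` carrier (G \<times>\<times> H) = carrier H"
    using group.is_monoid[OF G] monoid.one_closed by force
  ultimately show "h \<in> derived H (carrier H)" using snd_derived[OF G H] by simp
next
  assume "h \<in> derived H (carrier H)"
  hence "(\<one>\<^bsub>G\<^esub>, h) \<in> (\<lambda>h. (\<one>\<^bsub>G\<^esub>, h)) ` derived H (carrier H)" by blast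
  also have "\<dots> = derived (G \<times>\<times> H) ((\<lambda>h. (\<one>\<^bsub>G\<^esub>, h)) ` carrier H)"
    using group_hom.derived_img[OF inr_group_hom[OF G H], of "carrier H"] by simp
  also have "\<dots> \<subseteq> derived (G \<times>\<times> H) (carrier (G \<times>\<times> H))"
    by (rule group.mono_derived[OF DirProd_group[OF G H]])
       (use group.is_monoid[OF G] monoid.one_closed in force)
  finally show "(\<one>\<^bsub>G\<^esub>, h) \<in> derived (G \<times>\<times> H) (carrier (G \<times>\<times> H))" .
qed



lemma count_G:
  assumes G: "group G" and H: "group H" and fG: "finite (carrier G)" and fH: "finite (carrier H)"
    and U: "subgroup U (G \<times>\<times> H)" and fU: "fst ` U = carrier G" and sU: "snd ` U = carrier H"
  shows "card (U \<inter> derived (G \<times>\<times> H) (carrier (G \<times>\<times> H))) = card (derived H (carrier H)) * card (derived G (carrier G) \<inter> k1 G H U)"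
    and "card (derived (G \<times>\<times> H) U) = card (derived H (carrier H)) * card (k1 G H (derived (G \<times>\<times> H) U))"
proof -
  interpret W: group "G \<times>\<times> H" by (rule DirProd_group[OF G H])
  interpret G: group G by (rule G)
  interpret H: group H by (rule H)
  define W' where "W' = derived (G \<times>\<times> H) (carrier (G \<times>\<times> H))"
  define D where "D = derived (G \<times>\<times> H) U"
  define E where "E = U \<inter> W'"
  have Uc: "U \<subseteq> carrier (G \<times>\<times> H)" using U subgroup.subset by blast
  have finW: "finite (carrier (G \<times>\<times> H))" using fG fH by simp
  have DU: "D \<subseteq> U" unfolding D_def by (rule W.derived_incl[OF subset_refl U])
  have DW: "D \<subseteq> W'" unfolding D_def W'_def by (rule W.mono_derived[OF Uc])
  have DE: "D \<subseteq> E" using DU DW E_def by blast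
  have sD: "subgroup D (G \<times>\<times> H)" unfolding D_def by (rule W.derived_is_subgroup[OF Uc])
  have sW': "subgroup W' (G \<times>\<times> H)" unfolding W'_def by (rule W.derived_is_subgroup) simp
  have sE: "subgroup E (G \<times>\<times> H)" unfolding E_def by (rule W.subgroups_Inter_pair[OF U sW'])
  have finE: "finite E" using finW sE subgroup.subset finite_subset by blast
  have finD: "finite D" using finW sD subgroup.subset finite_subset by blast
  have sndW: "snd ` carrier (G \<times>\<times> H) = carrier H" by force
  have sndD: "snd ` D = derived H (carrier H)" unfolding D_def using snd_derived[OF G H Uc] sU by simp
  have sndW': "snd ` W' = derived H (carrier H)" unfolding W'_def using snd_derived[OF G H subset_refl] sndW by simp
  have sndE: "snd ` E = derived H (carrier H)"
  proof
    show "snd ` E \<subseteq> derived H (carrier H)" using sndW' E_def by blast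
    show "derived H (carrier H) \<subseteq> snd ` E" using sndD DE by blast
  qed
  have hs: "snd \<in> hom (G \<times>\<times> H) H" using snd_group_hom[OF G H] by (simp add: group_hom_def group_hom_axioms_def)
  have inj: "inj_on (\<lambda>g. (g, \<one>\<^bsub>H\<^esub>)) Z" for Z by (auto simp: inj_on_def)
  have kE: "{z\<in>E. snd z = \<one>\<^bsub>H\<^esub>} = (\<lambda>g. (g, \<one>\<^bsub>H\<^esub>)) ` (derived G (carrier G) \<inter> k1 G H U)"
  proof
    show "{z\<in>E. snd z = \<one>\<^bsub>H\<^esub>} \<subseteq> (\<lambda>g. (g, \<one>\<^bsub>H\<^esub>)) ` (derived G (carrier G) \<inter> k1 G H U)"
    proof
      fix z assume z: "z \<in> {z\<in>E. snd z = \<one>\<^bsub>H\<^esub>}"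
      then obtain g where g: "z = (g, \<one>\<^bsub>H\<^esub>)" by (cases z) auto
      have gc: "g \<in> carrier G" using z g E_def Uc by auto
      have "g \<in> derived G (carrier G)" using inl_derived[OF G H gc] z g E_def W'_def by auto
      moreover have "g \<in> k1 G H U" using z g gc E_def by (auto simp: k1_def)
      ultimately show "z \<in> (\<lambda>g. (g, \<one>\<^bsub>H\<^esub>)) ` (derived G (carrier G) \<inter> k1 G H U)" using g by blast
    qed
    show "(\<lambda>g. (g, \<one>\<^bsub>H\<^esub>)) ` (derived G (carrier G) \<inter> k1 G H U) \<subseteq> {z\<in>E. snd z = \<one>\<^bsub>H\<^esub>}"
    proof
      fix z assume "z \<in> (\<lambda>g. (g, \<one>\<^bsub>H\<^esub>)) ` (derived G (carrier G) \<inter> k1 G H U)"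
      then obtain g where g: "z = (g, \<one>\<^bsub>H\<^esub>)" "g \<in> derived G (carrier G)" "g \<in> k1 G H U" by blast
      have gc: "g \<in> carrier G" using g(3) by (simp add: k1_def)
      show "z \<in> {z\<in>E. snd z = \<one>\<^bsub>H\<^esub>}"
        using g inl_derived[OF G H gc] unfolding E_def W'_def by (auto simp: k1_def)
    qed
  qed
  have kD: "{z\<in>D. snd z = \<one>\<^bsub>H\<^esub>} = (\<lambda>g. (g, \<one>\<^bsub>H\<^esub>)) ` (k1 G H D)"
  proof
    show "{z\<in>D. snd z = \<one>\<^bsub>H\<^esub>} \<subseteq> (\<lambda>g. (g, \<one>\<^bsub>H\<^esub>)) ` (k1 G H D)"
    proof
      fix z assume z: "z \<in> {z\<in>D. snd z = \<one>\<^bsub>H\<^esub>}"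
      then obtain g where g: "z = (g, \<one>\<^bsub>H\<^esub>)" by (cases z) auto
      have gc: "g \<in> carrier G" using z g DU Uc by auto
      have "g \<in> k1 G H D" using z g gc by (auto simp: k1_def)
      thus "z \<in> (\<lambda>g. (g, \<one>\<^bsub>H\<^esub>)) ` (k1 G H D)" using g by blast
    qed
    show "(\<lambda>g. (g, \<one>\<^bsub>H\<^esub>)) ` (k1 G H D) \<subseteq> {z\<in>D. snd z = \<one>\<^bsub>H\<^esub>}"
      by (auto simp: k1_def)
  qed
  have "card E = card (snd ` E) * card {z\<in>E. snd z = \<one>\<^bsub>H\<^esub>}"
    by (rule W.card_fibres_hom[OF hs H sE finE])
  also have "\<dots> = card (derived H (carrier H)) * card (derived G (carrier G) \<inter> k1 G H U)"
    using sndE kE card_image[OF inj[of "derived G (carrier G) \<inter> k1 G H U"]] by simp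
  finally show "card (U \<inter> derived (G \<times>\<times> H) (carrier (G \<times>\<times> H))) = card (derived H (carrier H)) * card (derived G (carrier G) \<inter> k1 G H U)"
    unfolding E_def W'_def .
  have "card D = card (snd ` D) * card {z\<in>D. snd z = \<one>\<^bsub>H\<^esub>}"
    by (rule W.card_fibres_hom[OF hs H sD finD])
  also have "\<dots> = card (derived H (carrier H)) * card (k1 G H D)"
    using sndD kD card_image[OF inj[of "k1 G H D"]] by simp
  finally show "card (derived (G \<times>\<times> H) U) = card (derived H (carrier H)) * card (k1 G H (derived (G \<times>\<times> H) U))"
    unfolding D_def .
qed


lemma count_H:
  assumes G: "group G" and H: "group H" and fG: "finite (carrier G)" and fH: "finite (carrier H)"
    and U: "subgroup U (G \<times>\<times> H)" and fU: "fst ` U = carrier G" and sU: "snd ` U = carrier H"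
  shows "card (U \<inter> derived (G \<times>\<times> H) (carrier (G \<times>\<times> H))) = card (derived G (carrier G)) * card (derived H (carrier H) \<inter> k2 G H U)"
    and "card (derived (G \<times>\<times> H) U) = card (derived G (carrier G)) * card (k2 G H (derived (G \<times>\<times> H) U))"
proof -
  interpret W: group "G \<times>\<times> H" by (rule DirProd_group[OF G H])
  interpret G: group G by (rule G)
  interpret H: group H by (rule H)
  define W' where "W' = derived (G \<times>\<times> H) (carrier (G \<times>\<times> H))"
  define D where "D = derived (G \<times>\<times> H) U"
  define E where "E = U \<inter> W'"
  have Uc: "U \<subseteq> carrier (G \<times>\<times> H)" using U subgroup.subset by blast
  have finW: "finite (carrier (G \<times>\<times> H))" using fG fH by simp
  have DU: "D \<subseteq> U" unfolding D_def by (rule W.derived_incl[OF subset_refl U])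
  have DW: "D \<subseteq> W'" unfolding D_def W'_def by (rule W.mono_derived[OF Uc])
  have DE: "D \<subseteq> E" using DU DW E_def by blast
  have sD: "subgroup D (G \<times>\<times> H)" unfolding D_def by (rule W.derived_is_subgroup[OF Uc])
  have sW': "subgroup W' (G \<times>\<times> H)" unfolding W'_def by (rule W.derived_is_subgroup) simp
  have sE: "subgroup E (G \<times>\<times> H)" unfolding E_def by (rule W.subgroups_Inter_pair[OF U sW'])
  have finE: "finite E" using finW sE subgroup.subset finite_subset by blast
  have finD: "finite D" using finW sD subgroup.subset finite_subset by blast
  have PW: "fst ` carrier (G \<times>\<times> H) = carrier G" by force
  have PD: "fst ` D = derived G (carrier G)" unfolding D_def using fst_derived[OF G H Uc] fU by simp
  have PW': "fst ` W' = derived G (carrier G)" unfolding W'_def using fst_derived[OF G H subset_refl] PW by simp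
  have PE: "fst ` E = derived G (carrier G)"
  proof
    show "fst ` E \<subseteq> derived G (carrier G)" using PW' E_def by blast
    show "derived G (carrier G) \<subseteq> fst ` E" using PD DE by blast
  qed
  have hs: "fst \<in> hom (G \<times>\<times> H) G" using fst_group_hom[OF G H] by (simp add: group_hom_def group_hom_axioms_def)
  have inj: "inj_on (\<lambda>g. (\<one>\<^bsub>G\<^esub>, g)) Z" for Z by (auto simp: inj_on_def)
  have kE: "{z\<in>E. fst z = \<one>\<^bsub>G\<^esub>} = (\<lambda>g. (\<one>\<^bsub>G\<^esub>, g)) ` (derived H (carrier H) \<inter> k2 G H U)"
  proof
    show "{z\<in>E. fst z = \<one>\<^bsub>G\<^esub>} \<subseteq> (\<lambda>g. (\<one>\<^bsub>G\<^esub>, g)) ` (derived H (carrier H) \<inter> k2 G H U)"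
    proof
      fix z assume z: "z \<in> {z\<in>E. fst z = \<one>\<^bsub>G\<^esub>}"
      then obtain g where g: "z = (\<one>\<^bsub>G\<^esub>, g)" by (cases z) auto
      have gc: "g \<in> carrier H" using z g E_def Uc by auto
      have "g \<in> derived H (carrier H)" using inr_derived[OF G H gc] z g E_def W'_def by auto
      moreover have "g \<in> k2 G H U" using z g gc E_def by (auto simp: k2_def)
      ultimately show "z \<in> (\<lambda>g. (\<one>\<^bsub>G\<^esub>, g)) ` (derived H (carrier H) \<inter> k2 G H U)" using g by blast
    qed
    show "(\<lambda>g. (\<one>\<^bsub>G\<^esub>, g)) ` (derived H (carrier H) \<inter> k2 G H U) \<subseteq> {z\<in>E. fst z = \<one>\<^bsub>G\<^esub>}"
    proof
      fix z assume "z \<in> (\<lambda>g. (\<one>\<^bsub>G\<^esub>, g)) ` (derived H (carrier H) \<inter> k2 G H U)"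
      then obtain g where g: "z = (\<one>\<^bsub>G\<^esub>, g)" "g \<in> derived H (carrier H)" "g \<in> k2 G H U" by blast
      have gc: "g \<in> carrier H" using g(3) by (simp add: k2_def)
      show "z \<in> {z\<in>E. fst z = \<one>\<^bsub>G\<^esub>}"
        using g inr_derived[OF G H gc] unfolding E_def W'_def by (auto simp: k2_def)
    qed
  qed
  have kD: "{z\<in>D. fst z = \<one>\<^bsub>G\<^esub>} = (\<lambda>g. (\<one>\<^bsub>G\<^esub>, g)) ` (k2 G H D)"
  proof
    show "{z\<in>D. fst z = \<one>\<^bsub>G\<^esub>} \<subseteq> (\<lambda>g. (\<one>\<^bsub>G\<^esub>, g)) ` (k2 G H D)"
    proof
      fix z assume z: "z \<in> {z\<in>D. fst z = \<one>\<^bsub>G\<^esub>}"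
      then obtain g where g: "z = (\<one>\<^bsub>G\<^esub>, g)" by (cases z) auto
      have gc: "g \<in> carrier H" using z g DU Uc by auto
      have "g \<in> k2 G H D" using z g gc by (auto simp: k2_def)
      thus "z \<in> (\<lambda>g. (\<one>\<^bsub>G\<^esub>, g)) ` (k2 G H D)" using g by blast
    qed
    show "(\<lambda>g. (\<one>\<^bsub>G\<^esub>, g)) ` (k2 G H D) \<subseteq> {z\<in>D. fst z = \<one>\<^bsub>G\<^esub>}"
      by (auto simp: k2_def)
  qed
  have "card E = card (fst ` E) * card {z\<in>E. fst z = \<one>\<^bsub>G\<^esub>}"
    by (rule W.card_fibres_hom[OF hs G sE finE])
  also have "\<dots> = card (derived G (carrier G)) * card (derived H (carrier H) \<inter> k2 G H U)"
    using PE kE card_image[OF inj[of "derived H (carrier H) \<inter> k2 G H U"]] by simp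
  finally show "card (U \<inter> derived (G \<times>\<times> H) (carrier (G \<times>\<times> H))) = card (derived G (carrier G)) * card (derived H (carrier H) \<inter> k2 G H U)"
    unfolding E_def W'_def .
  have "card D = card (fst ` D) * card {z\<in>D. fst z = \<one>\<^bsub>G\<^esub>}"
    by (rule W.card_fibres_hom[OF hs G sD finD])
  also have "\<dots> = card (derived G (carrier G)) * card (k2 G H D)"
    using PD kD card_image[OF inj[of "k2 G H D"]] by simp
  finally show "card (derived (G \<times>\<times> H) U) = card (derived G (carrier G)) * card (k2 G H (derived (G \<times>\<times> H) U))"
    unfolding D_def .
qed



lemma ext_inv_trivial:
  assumes W: "group W" and A: "comm_group A" and K: "subgroup K W"
  shows "ext_inv W A K (derived W K) (\<lambda>_. \<one>\<^bsub>A\<^esub>)"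
proof -
  interpret W: group W by (rule W)
  interpret A: comm_group A by (rule A)
  have Kc: "K \<subseteq> carrier W" using K subgroup.subset by blast
  show ?thesis unfolding ext_inv_def mhom_def
  proof (intro conjI ballI Pi_I)
    show "subgroup (derived W K) W" by (rule W.derived_is_subgroup[OF Kc])
    show "derived W K \<subseteq> K" by (rule W.derived_incl[OF subset_refl K])
  next
    fix x y assume "x \<in> K" "y \<in> K"
    thus "x \<otimes>\<^bsub>W\<^esub> y \<otimes>\<^bsub>W\<^esub> inv\<^bsub>W\<^esub> x \<otimes>\<^bsub>W\<^esub> inv\<^bsub>W\<^esub> y \<in> derived W K"
      unfolding derived_def by (intro generate.incl) blast
  qed auto
qed

lemma mhom_trivial_inv: "ext_inv W A K V \<psi> \<Longrightarrow> subgroup V W" by (simp add: ext_inv_def)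

lemma ext_iff:
  assumes G: "group G" and H: "group H" and fG: "finite (carrier G)" and fH: "finite (carrier H)"
    and U: "subgroup U (G \<times>\<times> H)" and A: "comm_group A" and hyp: "satisfies_hypothesis A \<pi>"
  shows "extensible G H A U \<longleftrightarrow>
     (\<forall>p\<in>\<pi>. multiplicity p (card (U \<inter> derived (G \<times>\<times> H) (carrier (G \<times>\<times> H)))) = multiplicity p (card (derived (G \<times>\<times> H) U)))"
proof -
  define W where "W = G \<times>\<times> H"
  have Wg: "group W" unfolding W_def by (rule DirProd_group[OF G H])
  interpret W: group W by (rule Wg)
  interpret A: comm_group A by (rule A)
  have finW: "finite (carrier W)" using fG fH by (simp add: W_def)
  have U': "subgroup U W" using U by (simp add: W_def)
  define W' where "W' = derived W (carrier W)"
  define D where "D = derived W U"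
  define E where "E = U \<inter> W'"
  have Uc: "U \<subseteq> carrier W" using U' subgroup.subset by blast
  have DU: "D \<subseteq> U" unfolding D_def by (rule W.derived_incl[OF subset_refl U'])
  have DW: "D \<subseteq> W'" unfolding D_def W'_def by (rule W.mono_derived[OF Uc])
  have DE: "D \<subseteq> E" using DU DW E_def by blast
  have EU: "E \<subseteq> U" using E_def by blast
  have sD: "subgroup D W" unfolding D_def by (rule W.derived_is_subgroup[OF Uc])
  have sW': "subgroup W' W" unfolding W'_def by (rule W.derived_is_subgroup) simp
  have sE: "subgroup E W" unfolding E_def by (rule W.subgroups_Inter_pair[OF U' sW'])
  have finE: "finite E" using finW sE subgroup.subset finite_subset by blast
  have finD: "finite D" using finW sD subgroup.subset finite_subset by blast
  have cD0: "card D \<noteq> 0" using finD subgroup.one_closed[OF sD] by (auto simp: card_eq_0_iff)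
  have cE0: "card E \<noteq> 0" using finE subgroup.one_closed[OF sE] by (auto simp: card_eq_0_iff)
  have dDE: "card D dvd card E" by (rule card_sub_dvd[OF Wg sD sE DE finE])
  have pr: "\<forall>p\<in>\<pi>. Factorial_Ring.prime p" using hyp by (simp add: satisfies_hypothesis_def)
  have "extensible G H A U \<longleftrightarrow> (\<forall>p\<in>\<pi>. multiplicity p (card E) = multiplicity p (card D))"
  proof
    assume ext: "extensible G H A U"
    show "\<forall>p\<in>\<pi>. multiplicity p (card E) = multiplicity p (card D)"
    proof (rule ballI, rule ccontr)
      fix p assume pp: "p \<in> \<pi>" and ne: "multiplicity p (card E) \<noteq> multiplicity p (card D)"
      have p: "Factorial_Ring.prime p" using pr pp by blast
      have "multiplicity p (card D) \<le> multiplicity p (card E)" by (rule dvd_imp_multiplicity_le[OF dDE cE0])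
      hence lt: "multiplicity p (card D) < multiplicity p (card E)" using ne by simp
      obtain x where xE: "x \<in> E" and xD: "x \<notin> D" and xp: "x [^]\<^bsub>W\<^esub> p \<in> D"
        using order_p_elem[OF Wg finW sD sE DE p lt] by blast
      have xc: "x \<in> carrier W" using xE sE subgroup.subset by blast
      have xU: "x \<in> U" using xE EU by blast
      obtain \<zeta> where z: "\<zeta> \<in> carrier A" "\<zeta> [^]\<^bsub>A\<^esub> p = \<one>\<^bsub>A\<^esub>" "\<zeta> \<noteq> \<one>\<^bsub>A\<^esub>"
        using A.elem_order_p[OF hyp pp] by blast
      have ex: "\<exists>n::nat. 0 < n \<and> x [^]\<^bsub>W\<^esub> n \<in> D" using xp prime_gt_0_nat[OF p] by blast
      define k where "k = (LEAST n::nat. 0 < n \<and> x [^]\<^bsub>W\<^esub> n \<in> D)"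
      have kk: "0 < k \<and> x [^]\<^bsub>W\<^esub> k \<in> D" unfolding k_def by (rule LeastI_ex[OF ex])
      have kmin: "x [^]\<^bsub>W\<^esub> m \<notin> D" if "0 < m" "m < k" for m :: nat
        using not_less_Least[of m "\<lambda>n. 0 < n \<and> x [^]\<^bsub>W\<^esub> n \<in> D"] that unfolding k_def by blast
      have dv: "int k dvd i" if "x [^]\<^bsub>W\<^esub> (i::int) \<in> D" for i
        by (rule least_pow_dvd[OF Wg xc sD _ _ kmin that]) (use kk in auto)
      have "x [^]\<^bsub>W\<^esub> (int p) \<in> D" using xp int_pow_int[where x=x and G=W and n=p] by simp
      hence "int k dvd int p" by (rule dv)
      hence "k dvd p" by simp
      hence "k = 1 \<or> k = p" using p unfolding prime_nat_iff by blast
      moreover have "k \<noteq> 1" using kk xD xc by auto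
      ultimately have kp: "k = p" by blast
      have Hc: "\<forall>i::int. x [^]\<^bsub>W\<^esub> i \<in> D \<longrightarrow> (\<lambda>_. \<one>\<^bsub>A\<^esub>) (x [^]\<^bsub>W\<^esub> i) = \<zeta> [^]\<^bsub>A\<^esub> i"
      proof (intro allI impI)
        fix i :: int assume "x [^]\<^bsub>W\<^esub> i \<in> D"
        then obtain q where q: "i = int p * q" using dv kp by (meson dvdE)
        have "\<zeta> [^]\<^bsub>A\<^esub> i = (\<zeta> [^]\<^bsub>A\<^esub> (int p)) [^]\<^bsub>A\<^esub> q" using q A.int_pow_pow[OF z(1)] by simp
        also have "\<dots> = \<one>\<^bsub>A\<^esub>" using z(2) int_pow_int[where x=\<zeta> and G=A and n=p] by simp
        finally show "(\<lambda>_. \<one>\<^bsub>A\<^esub>) (x [^]\<^bsub>W\<^esub> i) = \<zeta> [^]\<^bsub>A\<^esub> i" by simp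
      qed
      have I0: "ext_inv W A U D (\<lambda>_. \<one>\<^bsub>A\<^esub>)" unfolding D_def by (rule ext_inv_trivial[OF Wg A U'])
      obtain \<chi> where ch: "mhom W A (generate W {x}) \<chi>" and agree: "\<forall>z\<in>D \<inter> generate W {x}. \<one>\<^bsub>A\<^esub> = \<chi> z"
        and chx: "\<forall>i::int. \<chi> (x [^]\<^bsub>W\<^esub> i) = \<zeta> [^]\<^bsub>A\<^esub> i"
        using ext_cyc[OF Wg A xc sD _ z(1) Hc] by auto
      have chix: "\<chi> x = \<zeta>" using chx[rule_format, of 1] xc z(1) by simp
      have S: "subgroup (generate W {x}) W" using W.generate_is_subgroup xc by simp
      have SU: "generate W {x} \<subseteq> U" using W.generate_subgroup_incl[OF _ U'] xU by simp
      have xS: "x \<in> generate W {x}" by (rule generate.incl) simp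
      obtain \<theta>' where th': "ext_inv W A U {v \<otimes>\<^bsub>W\<^esub> s | v s. v \<in> D \<and> s \<in> generate W {x}} \<theta>'"
        and thS: "\<forall>s\<in>generate W {x}. \<theta>' s = \<chi> s"
        using ext_prod[OF Wg A U' I0 S SU ch] agree by auto
      obtain \<phi> where ph: "mhom W A U \<phi>" and phe: "\<forall>v\<in>{v \<otimes>\<^bsub>W\<^esub> s | v s. v \<in> D \<and> s \<in> generate W {x}}. \<phi> v = \<theta>' v"
        using ext_main[OF Wg finW A hyp U' th'] by blast
      have "\<one>\<^bsub>W\<^esub> \<otimes>\<^bsub>W\<^esub> x \<in> {v \<otimes>\<^bsub>W\<^esub> s | v s. v \<in> D \<and> s \<in> generate W {x}}"
        using subgroup.one_closed[OF sD] xS by blast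
      hence "x \<in> {v \<otimes>\<^bsub>W\<^esub> s | v s. v \<in> D \<and> s \<in> generate W {x}}" unfolding W.l_one[OF xc] .
      hence "\<phi> x = \<theta>' x" by (rule bspec[OF phe])
      hence phx: "\<phi> x = \<zeta>" using thS xS chix by simp
      have "\<phi> \<in> hom (subgroup_generated W U) A" by (rule mhom_hom[OF U', THEN iffD1, OF ph])
      hence "\<phi> \<in> hom (subgroup_generated (G \<times>\<times> H) U) A" by (simp add: W_def)
      then obtain \<psi> where ps: "\<psi> \<in> hom (G \<times>\<times> H) A" and pse: "\<forall>u\<in>U. \<psi> u = \<phi> u"
        using ext unfolding extensible_def by blast
      have "\<psi> \<in> hom W A" using ps by (simp add: W_def)
      hence "mhom W A (carrier W) \<psi>" by (rule mhom_carrier[THEN iffD2])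
      hence "\<forall>z\<in>W'. \<psi> z = \<one>\<^bsub>A\<^esub>" unfolding W'_def
        by (rule mhom_kills_derived[OF Wg A W.subgroup_self])
      moreover have "x \<in> W'" using xE E_def by blast
      ultimately have "\<psi> x = \<one>\<^bsub>A\<^esub>" by blast
      thus False using pse xU phx z(3) by simp
    qed
  next
    assume cond: "\<forall>p\<in>\<pi>. multiplicity p (card E) = multiplicity p (card D)"
    show "extensible G H A U" unfolding extensible_def
    proof
      fix \<phi> assume "\<phi> \<in> hom (subgroup_generated (G \<times>\<times> H) U) A"
      hence "\<phi> \<in> hom (subgroup_generated W U) A" by (simp add: W_def)
      hence ph: "mhom W A U \<phi>" by (rule mhom_hom[OF U', THEN iffD2])
      have phc: "\<And>x. x \<in> U \<Longrightarrow> \<phi> x \<in> carrier A" using mhom_props(5)[OF Wg A.is_group U' ph] .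
      have phm: "\<And>x y. x \<in> U \<Longrightarrow> y \<in> U \<Longrightarrow> \<phi> (x \<otimes>\<^bsub>W\<^esub> y) = \<phi> x \<otimes>\<^bsub>A\<^esub> \<phi> y" using ph by (simp add: mhom_def)
      have phi: "\<And>x. x \<in> U \<Longrightarrow> \<phi> (inv\<^bsub>W\<^esub> x) = inv\<^bsub>A\<^esub> \<phi> x" using mhom_props(2)[OF Wg A.is_group U' ph] .
      have kD: "\<forall>z\<in>D. \<phi> z = \<one>\<^bsub>A\<^esub>" unfolding D_def by (rule mhom_kills_derived[OF Wg A U' ph])
      define GU where "GU = subgroup_generated W U"
      interpret GU: group GU unfolding GU_def by simp
      have cGU: "carrier GU = U" unfolding GU_def by (rule subgroup.carrier_subgroup_generated_subgroup[OF U'])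
      have phh: "\<phi> \<in> hom GU A" unfolding GU_def by (rule mhom_hom[OF U', THEN iffD1, OF ph])
      have ghom: "group_hom GU A \<phi>" using phh by (simp add: group_hom_def group_hom_axioms_def)
      have sE': "subgroup E GU" unfolding GU_def by (rule W.subgroup_of_subgroup_generated[OF EU sE])
      define Kz where "Kz = {e\<in>E. \<phi> e = \<one>\<^bsub>A\<^esub>}"
      have cnt: "card E = card (\<phi> ` E) * card Kz"
        unfolding Kz_def by (rule GU.card_fibres_hom[OF phh A.is_group sE' finE])
      have sKz: "subgroup Kz W"
      proof (rule W.subgroupI)
        show "Kz \<subseteq> carrier W" using Kz_def sE subgroup.subset by blast
        show "Kz \<noteq> {}" using subgroup.one_closed[OF sE] mhom_props(1)[OF Wg A.is_group U' ph] Kz_def by blast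
      next
        fix a assume "a \<in> Kz"
        hence aE: "a \<in> E" and pa: "\<phi> a = \<one>\<^bsub>A\<^esub>" unfolding Kz_def by auto
        have "\<phi> (inv\<^bsub>W\<^esub> a) = \<one>\<^bsub>A\<^esub>" using phi[OF subsetD[OF EU aE]] pa by simp
        moreover have "inv\<^bsub>W\<^esub> a \<in> E" by (rule subgroup.m_inv_closed[OF sE aE])
        ultimately show "inv\<^bsub>W\<^esub> a \<in> Kz" unfolding Kz_def by blast
      next
        fix a b assume "a \<in> Kz" "b \<in> Kz"
        hence aE: "a \<in> E" and pa: "\<phi> a = \<one>\<^bsub>A\<^esub>" and bE: "b \<in> E" and pb: "\<phi> b = \<one>\<^bsub>A\<^esub>"
          unfolding Kz_def by auto
        have "\<phi> (a \<otimes>\<^bsub>W\<^esub> b) = \<one>\<^bsub>A\<^esub>" using phm[OF subsetD[OF EU aE] subsetD[OF EU bE]] pa pb by simp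
        moreover have "a \<otimes>\<^bsub>W\<^esub> b \<in> E" by (rule subgroup.m_closed[OF sE aE bE])
        ultimately show "a \<otimes>\<^bsub>W\<^esub> b \<in> Kz" unfolding Kz_def by blast
      qed
      have DKz: "D \<subseteq> Kz" using DE kD Kz_def by blast
      have finKz: "finite Kz" using finE Kz_def by simp
      have dKz: "card D dvd card Kz" by (rule card_sub_dvd[OF Wg sD sKz DKz finKz])
      define n where "n = card (\<phi> ` E)"
      have n0: "n \<noteq> 0" using cnt cE0 n_def by auto
      have Kz0: "card Kz \<noteq> 0" using cnt cE0 by auto
      have npi: "\<not> p dvd n" if pp: "p \<in> \<pi>" for p
      proof
        assume pn: "p dvd n"
        have p: "Factorial_Ring.prime p" using pr pp by blast
        have "multiplicity p (card E) = multiplicity p n + multiplicity p (card Kz)"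
          using cnt n0 Kz0 p by (simp add: n_def prime_elem_multiplicity_mult_distrib prime_imp_prime_elem)
        moreover have "multiplicity p (card D) \<le> multiplicity p (card Kz)"
          by (rule dvd_imp_multiplicity_le[OF dKz Kz0])
        moreover have "multiplicity p n \<ge> 1"
          using power_dvd_iff_le_multiplicity[where p=p and n=1 and x=n] pn n0 p prime_gt_1_nat[OF p]
          by (simp add: prime_imp_prime_elem not_prime_unit)
        ultimately show False using cond pp by fastforce
      qed
      have pi1: "pi_part \<pi> n = 1" by (rule pi_part_one) (use npi in blast)
      have killE: "\<phi> z = \<one>\<^bsub>A\<^esub>" if zE: "z \<in> E" for z
      proof -
        have simg: "subgroup (\<phi> ` E) A" by (rule group_hom.subgroup_img_is_subgroup[OF ghom sE'])
        interpret IA: group "subgroup_generated A (\<phi> ` E)" by simp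
        have cIA: "carrier (subgroup_generated A (\<phi> ` E)) = \<phi> ` E"
          by (rule subgroup.carrier_subgroup_generated_subgroup[OF simg])
        have "\<phi> z \<in> \<phi> ` E" using zE by blast
        hence "\<phi> z [^]\<^bsub>subgroup_generated A (\<phi> ` E)\<^esub> order (subgroup_generated A (\<phi> ` E)) = \<one>\<^bsub>subgroup_generated A (\<phi> ` E)\<^esub>"
          using IA.pow_order_eq_1 cIA by blast
        hence pz: "\<phi> z [^]\<^bsub>A\<^esub> n = \<one>\<^bsub>A\<^esub>" using cIA by (simp add: pow_subgroup_generated order_def n_def)
        have zc: "\<phi> z \<in> carrier A" using zE EU phc by blast
        have T: "\<phi> z \<in> torsion_part A n" "\<one>\<^bsub>A\<^esub> \<in> torsion_part A n"
          using pz zc by (auto simp: torsion_part_def)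
        have "card (torsion_part A n) = 1" using hyp n0 pi1 by (simp add: satisfies_hypothesis_def)
        then obtain c where "torsion_part A n = {c}" by (auto simp: card_1_singleton_iff)
        thus ?thesis using T by simp
      qed
      have I0: "ext_inv W A (carrier W) W' (\<lambda>_. \<one>\<^bsub>A\<^esub>)" unfolding W'_def
        by (rule ext_inv_trivial[OF Wg A W.subgroup_self])
      have agree: "\<forall>z\<in>W' \<inter> U. \<one>\<^bsub>A\<^esub> = \<phi> z" using killE E_def by auto
      obtain \<theta>' where th': "ext_inv W A (carrier W) {v \<otimes>\<^bsub>W\<^esub> s | v s. v \<in> W' \<and> s \<in> U} \<theta>'"
        and thS: "\<forall>s\<in>U. \<theta>' s = \<phi> s"
        using ext_prod[OF Wg A W.subgroup_self I0 U' Uc ph agree] by auto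
      obtain \<theta> where th: "mhom W A (carrier W) \<theta>" and the: "\<forall>v\<in>{v \<otimes>\<^bsub>W\<^esub> s | v s. v \<in> W' \<and> s \<in> U}. \<theta> v = \<theta>' v"
        using ext_main[OF Wg finW A hyp W.subgroup_self th'] by blast
      have "\<forall>u\<in>U. \<theta> u = \<phi> u"
      proof
        fix u assume u: "u \<in> U"
        have "\<one>\<^bsub>W\<^esub> \<otimes>\<^bsub>W\<^esub> u \<in> {v \<otimes>\<^bsub>W\<^esub> s | v s. v \<in> W' \<and> s \<in> U}"
          using subgroup.one_closed[OF sW'] u by blast
        hence "u \<in> {v \<otimes>\<^bsub>W\<^esub> s | v s. v \<in> W' \<and> s \<in> U}" unfolding W.l_one[OF subsetD[OF Uc u]] .
        hence "\<theta> u = \<theta>' u" by (rule bspec[OF the])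
        thus "\<theta> u = \<phi> u" using thS u by simp
      qed
      moreover have "\<theta> \<in> hom W A" by (rule mhom_carrier[THEN iffD1, OF th])
      hence "\<theta> \<in> hom (G \<times>\<times> H) A" by (simp add: W_def)
      ultimately show "\<exists>\<psi>\<in>hom (G \<times>\<times> H) A. \<forall>u\<in>U. \<psi> u = \<phi> u" by blast
    qed
  qed
  thus ?thesis by (simp add: E_def W'_def D_def W_def)
qed



lemma k1_subgroup:
  assumes G: "group G" and H: "group H" and X: "subgroup Xs (G \<times>\<times> H)"
  shows "subgroup (k1 G H Xs) G"
proof -
  interpret G: group G by (rule G)
  interpret H: group H by (rule H)
  interpret W: group "G \<times>\<times> H" by (rule DirProd_group[OF G H])
  show ?thesis
  proof (rule G.subgroupI)
    show "k1 G H Xs \<subseteq> carrier G" by (auto simp: k1_def)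
    show "k1 G H Xs \<noteq> {}" using subgroup.one_closed[OF X] by (auto simp: k1_def)
  next
    fix a assume a: "a \<in> k1 G H Xs"
    hence a1: "(a, \<one>\<^bsub>H\<^esub>) \<in> Xs" "a \<in> carrier G" by (auto simp: k1_def)
    have "inv\<^bsub>G \<times>\<times> H\<^esub> (a, \<one>\<^bsub>H\<^esub>) \<in> Xs" by (rule subgroup.m_inv_closed[OF X a1(1)])
    moreover have "inv\<^bsub>G \<times>\<times> H\<^esub> (a, \<one>\<^bsub>H\<^esub>) = (inv\<^bsub>G\<^esub> a, \<one>\<^bsub>H\<^esub>)"
      using inv_DirProd[OF G H a1(2) H.one_closed] by simp
    ultimately show "inv\<^bsub>G\<^esub> a \<in> k1 G H Xs" using a1 by (auto simp: k1_def)
  next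
    fix a b assume a: "a \<in> k1 G H Xs" and b: "b \<in> k1 G H Xs"
    hence ab: "(a, \<one>\<^bsub>H\<^esub>) \<in> Xs" "(b, \<one>\<^bsub>H\<^esub>) \<in> Xs" "a \<in> carrier G" "b \<in> carrier G" by (auto simp: k1_def)
    have "(a, \<one>\<^bsub>H\<^esub>) \<otimes>\<^bsub>G \<times>\<times> H\<^esub> (b, \<one>\<^bsub>H\<^esub>) \<in> Xs" by (rule subgroup.m_closed[OF X ab(1,2)])
    moreover have "(a, \<one>\<^bsub>H\<^esub>) \<otimes>\<^bsub>G \<times>\<times> H\<^esub> (b, \<one>\<^bsub>H\<^esub>) = (a \<otimes>\<^bsub>G\<^esub> b, \<one>\<^bsub>H\<^esub>)" by simp
    ultimately show "a \<otimes>\<^bsub>G\<^esub> b \<in> k1 G H Xs" using ab by (auto simp: k1_def)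
  qed
qed

lemma k2_subgroup:
  assumes G: "group G" and H: "group H" and X: "subgroup Xs (G \<times>\<times> H)"
  shows "subgroup (k2 G H Xs) H"
proof -
  interpret G: group G by (rule G)
  interpret H: group H by (rule H)
  interpret W: group "G \<times>\<times> H" by (rule DirProd_group[OF G H])
  show ?thesis
  proof (rule H.subgroupI)
    show "k2 G H Xs \<subseteq> carrier H" by (auto simp: k2_def)
    show "k2 G H Xs \<noteq> {}" using subgroup.one_closed[OF X] by (auto simp: k2_def)
  next
    fix a assume a: "a \<in> k2 G H Xs"
    hence a1: "(\<one>\<^bsub>G\<^esub>, a) \<in> Xs" "a \<in> carrier H" by (auto simp: k2_def)
    have "inv\<^bsub>G \<times>\<times> H\<^esub> (\<one>\<^bsub>G\<^esub>, a) \<in> Xs" by (rule subgroup.m_inv_closed[OF X a1(1)])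
    moreover have "inv\<^bsub>G \<times>\<times> H\<^esub> (\<one>\<^bsub>G\<^esub>, a) = (\<one>\<^bsub>G\<^esub>, inv\<^bsub>H\<^esub> a)"
      using inv_DirProd[OF G H G.one_closed a1(2)] by simp
    ultimately show "inv\<^bsub>H\<^esub> a \<in> k2 G H Xs" using a1 by (auto simp: k2_def)
  next
    fix a b assume a: "a \<in> k2 G H Xs" and b: "b \<in> k2 G H Xs"
    hence ab: "(\<one>\<^bsub>G\<^esub>, a) \<in> Xs" "(\<one>\<^bsub>G\<^esub>, b) \<in> Xs" "a \<in> carrier H" "b \<in> carrier H" by (auto simp: k2_def)
    have "(\<one>\<^bsub>G\<^esub>, a) \<otimes>\<^bsub>G \<times>\<times> H\<^esub> (\<one>\<^bsub>G\<^esub>, b) \<in> Xs" by (rule subgroup.m_closed[OF X ab(1,2)])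
    moreover have "(\<one>\<^bsub>G\<^esub>, a) \<otimes>\<^bsub>G \<times>\<times> H\<^esub> (\<one>\<^bsub>G\<^esub>, b) = (\<one>\<^bsub>G\<^esub>, a \<otimes>\<^bsub>H\<^esub> b)" by simp
    ultimately show "a \<otimes>\<^bsub>H\<^esub> b \<in> k2 G H Xs" using ab by (auto simp: k2_def)
  qed
qed

theorem corollary3p3:
  fixes G :: "('a, 'c) monoid_scheme" and H :: "('b, 'd) monoid_scheme"
    and A :: "('e, 'f) monoid_scheme" and U :: "('a \<times> 'b) set" and \<pi> :: "nat set"
  assumes "group G" and "group H"
    and "finite (carrier G)" and "finite (carrier H)"
    and "subdirect G H U"
    and "comm_group A"
    and "satisfies_hypothesis A \<pi>"
  shows "(extensible G H A U \<longleftrightarrow>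
            (\<forall>p \<in> \<pi>. \<exists>P. sylow_subgroup_of G p P (derived G (carrier G) \<inter> k1 G H U)
                        \<and> P \<subseteq> k1 G H (derived (G \<times>\<times> H) U)))
       \<and> (extensible G H A U \<longleftrightarrow>
            (\<forall>p \<in> \<pi>. \<exists>P. sylow_subgroup_of H p P (derived H (carrier H) \<inter> k2 G H U)
                        \<and> P \<subseteq> k2 G H (derived (G \<times>\<times> H) U)))"
proof -
  note G = assms(1) and H = assms(2) and fG = assms(3) and fH = assms(4) and A = assms(6) and hyp = assms(7)
  have U: "subgroup U (G \<times>\<times> H)" and fU: "fst ` U = carrier G" and sU: "snd ` U = carrier H"
    using assms(5) by (auto simp: subdirect_def)
  interpret G: group G by (rule G)
  interpret H: group H by (rule H)
  interpret W: group "G \<times>\<times> H" by (rule DirProd_group[OF G H])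
  define W' where "W' = derived (G \<times>\<times> H) (carrier (G \<times>\<times> H))"
  define D where "D = derived (G \<times>\<times> H) U"
  define E where "E = U \<inter> W'"
  define G' where "G' = derived G (carrier G)"
  define H' where "H' = derived H (carrier H)"
  have pr: "\<forall>p\<in>\<pi>. Factorial_Ring.prime p" using hyp by (simp add: satisfies_hypothesis_def)
  have Uc: "U \<subseteq> carrier (G \<times>\<times> H)" using U subgroup.subset by blast
  have DU: "D \<subseteq> U" unfolding D_def by (rule W.derived_incl[OF subset_refl U])
  have DW: "D \<subseteq> W'" unfolding D_def W'_def by (rule W.mono_derived[OF Uc])
  have sD: "subgroup D (G \<times>\<times> H)" unfolding D_def by (rule W.derived_is_subgroup[OF Uc])
  have sG': "subgroup G' G" unfolding G'_def by (rule G.derived_is_subgroup) simp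
  have sH': "subgroup H' H" unfolding H'_def by (rule H.derived_is_subgroup) simp
  have fG': "finite G'" using fG sG' subgroup.subset finite_subset by blast
  have fH': "finite H'" using fH sH' subgroup.subset finite_subset by blast
  have cG'0: "card G' \<noteq> 0" using fG' subgroup.one_closed[OF sG'] by (auto simp: card_eq_0_iff)
  have cH'0: "card H' \<noteq> 0" using fH' subgroup.one_closed[OF sH'] by (auto simp: card_eq_0_iff)
  have ext: "extensible G H A U \<longleftrightarrow> (\<forall>p\<in>\<pi>. multiplicity p (card E) = multiplicity p (card D))"
    using ext_iff[OF G H fG fH U A hyp] by (simp add: E_def W'_def D_def)
  define M1 where "M1 = G' \<inter> k1 G H U"
  define L1 where "L1 = k1 G H D"
  have sM1: "subgroup M1 G" unfolding M1_def by (rule G.subgroups_Inter_pair[OF sG' k1_subgroup[OF G H U]])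
  have sL1: "subgroup L1 G" unfolding L1_def by (rule k1_subgroup[OF G H sD])
  have LM1: "L1 \<subseteq> M1"
  proof
    fix g assume g: "g \<in> L1"
    hence gc: "g \<in> carrier G" and gD: "(g, \<one>\<^bsub>H\<^esub>) \<in> D" by (auto simp: L1_def k1_def)
    have "g \<in> G'" using inl_derived[OF G H gc] gD DW unfolding G'_def W'_def by blast
    moreover have "g \<in> k1 G H U" using gc gD DU by (auto simp: k1_def)
    ultimately show "g \<in> M1" by (simp add: M1_def)
  qed
  have fM1: "finite M1" using fG sM1 subgroup.subset finite_subset by blast
  have fL1: "finite L1" using fG sL1 subgroup.subset finite_subset by blast
  have cM1: "card M1 \<noteq> 0" using fM1 subgroup.one_closed[OF sM1] by (auto simp: card_eq_0_iff)
  have cL1: "card L1 \<noteq> 0" using fL1 subgroup.one_closed[OF sL1] by (auto simp: card_eq_0_iff)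
  have cE1: "card E = card H' * card M1" and cD1: "card D = card H' * card L1"
    using count_G[OF G H fG fH U fU sU] by (simp_all add: E_def W'_def D_def H'_def M1_def G'_def L1_def)
  have eq1: "(\<forall>p\<in>\<pi>. multiplicity p (card E) = multiplicity p (card D)) \<longleftrightarrow>
     (\<forall>p\<in>\<pi>. \<exists>P. sylow_subgroup_of G p P M1 \<and> P \<subseteq> L1)"
  proof -
    have "multiplicity p (card E) = multiplicity p (card D) \<longleftrightarrow> (\<exists>P. sylow_subgroup_of G p P M1 \<and> P \<subseteq> L1)"
      if pp: "p \<in> \<pi>" for p
    proof -
      have p: "Factorial_Ring.prime p" using pr pp by blast
      have "multiplicity p (card E) = multiplicity p (card H') + multiplicity p (card M1)"
        using cE1 cH'0 cM1 p by (simp add: prime_elem_multiplicity_mult_distrib prime_imp_prime_elem)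
      moreover have "multiplicity p (card D) = multiplicity p (card H') + multiplicity p (card L1)"
        using cD1 cH'0 cL1 p by (simp add: prime_elem_multiplicity_mult_distrib prime_imp_prime_elem)
      ultimately show ?thesis using sylow_equiv[OF G fG sL1 sM1 LM1 p] by simp
    qed
    thus ?thesis by blast
  qed
  define M2 where "M2 = H' \<inter> k2 G H U"
  define L2 where "L2 = k2 G H D"
  have sM2: "subgroup M2 H" unfolding M2_def by (rule H.subgroups_Inter_pair[OF sH' k2_subgroup[OF G H U]])
  have sL2: "subgroup L2 H" unfolding L2_def by (rule k2_subgroup[OF G H sD])
  have LM2: "L2 \<subseteq> M2"
  proof
    fix g assume g: "g \<in> L2"
    hence gc: "g \<in> carrier H" and gD: "(\<one>\<^bsub>G\<^esub>, g) \<in> D" by (auto simp: L2_def k2_def)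
    have "g \<in> H'" using inr_derived[OF G H gc] gD DW unfolding H'_def W'_def by blast
    moreover have "g \<in> k2 G H U" using gc gD DU by (auto simp: k2_def)
    ultimately show "g \<in> M2" by (simp add: M2_def)
  qed
  have fM2: "finite M2" using fH sM2 subgroup.subset finite_subset by blast
  have fL2: "finite L2" using fH sL2 subgroup.subset finite_subset by blast
  have cM2: "card M2 \<noteq> 0" using fM2 subgroup.one_closed[OF sM2] by (auto simp: card_eq_0_iff)
  have cL2: "card L2 \<noteq> 0" using fL2 subgroup.one_closed[OF sL2] by (auto simp: card_eq_0_iff)
  have cE2: "card E = card G' * card M2" and cD2: "card D = card G' * card L2"
    using count_H[OF G H fG fH U fU sU] by (simp_all add: E_def W'_def D_def G'_def M2_def H'_def L2_def)
  have eq2: "(\<forall>p\<in>\<pi>. multiplicity p (card E) = multiplicity p (card D)) \<longleftrightarrow>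
     (\<forall>p\<in>\<pi>. \<exists>P. sylow_subgroup_of H p P M2 \<and> P \<subseteq> L2)"
  proof -
    have "multiplicity p (card E) = multiplicity p (card D) \<longleftrightarrow> (\<exists>P. sylow_subgroup_of H p P M2 \<and> P \<subseteq> L2)"
      if pp: "p \<in> \<pi>" for p
    proof -
      have p: "Factorial_Ring.prime p" using pr pp by blast
      have "multiplicity p (card E) = multiplicity p (card G') + multiplicity p (card M2)"
        using cE2 cG'0 cM2 p by (simp add: prime_elem_multiplicity_mult_distrib prime_imp_prime_elem)
      moreover have "multiplicity p (card D) = multiplicity p (card G') + multiplicity p (card L2)"
        using cD2 cG'0 cL2 p by (simp add: prime_elem_multiplicity_mult_distrib prime_imp_prime_elem)
      ultimately show ?thesis using sylow_equiv[OF H fH sL2 sM2 LM2 p] by simp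
    qed
    thus ?thesis by blast
  qed
  show ?thesis using ext eq1 eq2 unfolding M1_def L1_def M2_def L2_def G'_def H'_def D_def by simp
qed

end
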